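(* Let $\mathcal{C}$ be a pre-Hilbert $*$-category and $A$ an object of $\mathcal{C}$. Then: (1) $\mathcal{C}(A,A)$, with addition from the unique enrichment of $\mathcal{C}$ in abelian groups, multiplication given by composition, involution given by the restriction of the involution of $\mathcal{C}$, and positive cone $\mathcal{C}(A,A)_+ = \{x^*x : x\in\mathcal{C}(A,X) \text{ for some object } X\}$, is an ordered $*$-ring; (2) for each object $X$, $\mathcal{C}(A,X)$, with addition from the enrichment and right scalar multiplication by $\mathcal{C}(A,A)$ given by composition, is an inner product right $\mathcal{C}(A,A)$-module with inner product $\langle x,y\rangle = x^*y$; (3) for each morphism $f\colon X\to Y$ of $\mathcal{C}$, the map $\mathcal{C}(A,f)\colon \mathcal{C}(A,X)\to\mathcal{C}(A,Y)$, $x\mapsto fx$, is adjointable with adjoint $\mathcal{C}(A,f^* )$. Consequently the hom-functor $\mathcal{C}(A,-)$ factors through the forgetful functor $\mathbf{InnerProd}_{\mathcal{C}(A,A)}\to\mathbf{Set}$ via a $*$-functor $\mathcal{C}\to\mathbf{InnerProd}_{\mathcal{C}(A,A)}$.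
   Context: A $*$-category is a category with a choice of $f^*\colon Y\to X$ for each $f\colon X\to Y$ such that $1^*=1$, $(gf)^*=f^*g^*$, $(f^* )^*=f$; a $*$-functor is a functor $F$ between $*$-categories with $F(f^* )=(Ff)^*$. A pre-Hilbert $*$-category is a $*$-category with (R1) a zero object, (R2) orthonormal biproducts of all pairs of objects (biproducts $(X,s_1,r_1,s_2,r_2)$ with $r_k=s_k^*$), (R3) an isometric kernel (kernel $m$ with $m^*m=1$) for every morphism, and (R4) every diagonal $\Delta\colon X\to X\oplus X$ a kernel of some morphism; such a category is additive. A $*$-ring is a ring $R$ with a map $r\mapsto r^*$ satisfying $1^*=1$, $(sr)^*=r^*s^*$, $(r^* )^*=r$, $(r+s)^*=r^*+s^*$; it is anisotropic if $r^*r=0$ implies $r=0$. $R_{\mathrm{sa}}$ denotes the set of Hermitian elements ($a^*=a$). A positive cone on $R$ is a subset $P\subseteq R_{\mathrm{sa}}$ with $1\in P$, $P+P\subseteq P$, $r^*Pr\subseteq P$ for all $r\in R$, and $P\cap -P=\{0\}$. An ordered $*$-ring is an anisotropic $*$-ring with a positive cone $R_+$ (equivalently the order $a\le b$ iff $b-a\in R_+$). For an ordered $*$-ring $R$ and right $R$-module $X$, an inner product is a map $\langle-,-\rangle\colon X\times X\to R$ with $\langle x,yr+z\rangle=\langle x,y\rangle r+\langle x,z\rangle$, $\langle x,y\rangle^*=\langle y,x\rangle$, $\langle x,x\rangle\in R_+$, and $\langle x,x\rangle=0\Rightarrow x=0$. A function $f\colon X\to Y$ between inner product $R$-modules is adjointable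 if there is $f^*\colon Y\to X$ with $\langle f^*y,x\rangle=\langle y,fx\rangle$ for all $x,y$. $\mathbf{InnerProd}_R$ is the $*$-category of inner product $R$-modules and adjointable maps. *)

theory Defs
  imports "HOL-Algebra.Ring"
begin

record ('o,'m) star_cat =
  obj :: "'o set"
  mor :: "'m set"
  dm  :: "'m \<Rightarrow> 'o"
  cd  :: "'m \<Rightarrow> 'o"
  cmp :: "'m \<Rightarrow> 'm \<Rightarrow> 'm"   (* cmp g f = g \<circ> f *)
  idt :: "'o \<Rightarrow> 'm"
  str :: "'m \<Rightarrow> 'm"

definition Hom :: "('o,'m,'z) star_cat_scheme \<Rightarrow> 'o \<Rightarrow> 'o \<Rightarrow> 'm set" where
  "Hom C X Y = {f \<in> mor C. dm C f = X \<and> cd C f = Y}"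

definition is_category :: "('o,'m,'z) star_cat_scheme \<Rightarrow> bool" where
  "is_category C \<longleftrightarrow>
     (\<forall>f\<in>mor C. dm C f \<in> obj C \<and> cd C f \<in> obj C) \<and>
     (\<forall>X\<in>obj C. idt C X \<in> Hom C X X) \<and>
     (\<forall>f\<in>mor C. \<forall>g\<in>mor C. cd C f = dm C g \<longrightarrow> cmp C g f \<in> Hom C (dm C f) (cd C g)) \<and>
     (\<forall>f\<in>mor C. cmp C (idt C (cd C f)) f = f \<and> cmp C f (idt C (dm C f)) = f) \<and>
     (\<forall>f\<in>mor C. \<forall>g\<in>mor C. \<forall>h\<in>mor C. cd C f = dm C g \<longrightarrow> cd C g = dm C h \<longrightarrow>
        cmp C h (cmp C g f) = cmp C (cmp C h g) f)"

definition is_star_category :: "('o,'m,'z) star_cat_scheme \<Rightarrow> bool" where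
  "is_star_category C \<longleftrightarrow> is_category C \<and>
     (\<forall>f\<in>mor C. str C f \<in> Hom C (cd C f) (dm C f)) \<and>
     (\<forall>X\<in>obj C. str C (idt C X) = idt C X) \<and>
     (\<forall>f\<in>mor C. \<forall>g\<in>mor C. cd C f = dm C g \<longrightarrow> str C (cmp C g f) = cmp C (str C f) (str C g)) \<and>
     (\<forall>f\<in>mor C. str C (str C f) = f)"

definition zero_object :: "('o,'m,'z) star_cat_scheme \<Rightarrow> 'o \<Rightarrow> bool" where
  "zero_object C Z \<longleftrightarrow> Z \<in> obj C \<and>
     (\<forall>X\<in>obj C. (\<exists>!f. f \<in> Hom C X Z) \<and> (\<exists>!f. f \<in> Hom C Z X))"

definition zero_mor :: "('o,'m,'z) star_cat_scheme \<Rightarrow> 'm \<Rightarrow> bool" where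
  "zero_mor C f \<longleftrightarrow> f \<in> mor C \<and> (\<exists>Z. zero_object C Z \<and>
     (\<exists>a b. a \<in> Hom C (dm C f) Z \<and> b \<in> Hom C Z (cd C f) \<and> f = cmp C b a))"

definition biproduct :: "('o,'m,'z) star_cat_scheme \<Rightarrow> 'o \<Rightarrow> 'o \<Rightarrow> 'o \<Rightarrow> 'm \<Rightarrow> 'm \<Rightarrow> 'm \<Rightarrow> 'm \<Rightarrow> bool" where
  "biproduct C X1 X2 P s1 r1 s2 r2 \<longleftrightarrow>
     X1 \<in> obj C \<and> X2 \<in> obj C \<and> P \<in> obj C \<and>
     s1 \<in> Hom C X1 P \<and> r1 \<in> Hom C P X1 \<and> s2 \<in> Hom C X2 P \<and> r2 \<in> Hom C P X2 \<and>
     cmp C r1 s1 = idt C X1 \<and> cmp C r2 s2 = idt C X2 \<and>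
     zero_mor C (cmp C r2 s1) \<and> zero_mor C (cmp C r1 s2) \<and>
     (\<forall>W\<in>obj C. \<forall>f1\<in>Hom C W X1. \<forall>f2\<in>Hom C W X2.
        \<exists>!h. h \<in> Hom C W P \<and> cmp C r1 h = f1 \<and> cmp C r2 h = f2) \<and>
     (\<forall>W\<in>obj C. \<forall>g1\<in>Hom C X1 W. \<forall>g2\<in>Hom C X2 W.
        \<exists>!h. h \<in> Hom C P W \<and> cmp C h s1 = g1 \<and> cmp C h s2 = g2)"

definition orthonormal_biproduct :: "('o,'m,'z) star_cat_scheme \<Rightarrow> 'o \<Rightarrow> 'o \<Rightarrow> 'o \<Rightarrow> 'm \<Rightarrow> 'm \<Rightarrow> bool" where
  "orthonormal_biproduct C X1 X2 P s1 s2 \<longleftrightarrow> biproduct C X1 X2 P s1 (str C s1) s2 (str C s2)"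

definition kernel :: "('o,'m,'z) star_cat_scheme \<Rightarrow> 'm \<Rightarrow> 'm \<Rightarrow> bool" where
  "kernel C f m \<longleftrightarrow> f \<in> mor C \<and> m \<in> mor C \<and> cd C m = dm C f \<and> zero_mor C (cmp C f m) \<and>
     (\<forall>g\<in>mor C. cd C g = dm C f \<longrightarrow> zero_mor C (cmp C f g) \<longrightarrow>
        (\<exists>!h. h \<in> Hom C (dm C g) (dm C m) \<and> cmp C m h = g))"

definition pre_hilbert :: "('o,'m,'z) star_cat_scheme \<Rightarrow> bool" where
  "pre_hilbert C \<longleftrightarrow> is_star_category C \<and>
     (\<exists>Z. zero_object C Z) \<and>
     (\<forall>X1\<in>obj C. \<forall>X2\<in>obj C. \<exists>P s1 s2. orthonormal_biproduct C X1 X2 P s1 s2) \<and>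
     (\<forall>f\<in>mor C. \<exists>m. kernel C f m \<and> cmp C (str C m) m = idt C (dm C m)) \<and>
     (\<forall>X\<in>obj C. \<forall>P s1 s2 d. orthonormal_biproduct C X X P s1 s2 \<longrightarrow> d \<in> Hom C X P \<longrightarrow>
        cmp C (str C s1) d = idt C X \<longrightarrow> cmp C (str C s2) d = idt C X \<longrightarrow>
        (\<exists>f\<in>mor C. kernel C f d))"

definition ab_enrichment :: "('o,'m,'z) star_cat_scheme \<Rightarrow> ('m \<Rightarrow> 'm \<Rightarrow> 'm) \<Rightarrow> bool" where
  "ab_enrichment C pl \<longleftrightarrow>
     (\<forall>X\<in>obj C. \<forall>Y\<in>obj C. \<exists>z. comm_group \<lparr>carrier = Hom C X Y, mult = pl, one = z\<rparr>) \<and>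
     (\<forall>W\<in>obj C. \<forall>X\<in>obj C. \<forall>Y\<in>obj C. \<forall>Z\<in>obj C.
        \<forall>f\<in>Hom C X Y. \<forall>g\<in>Hom C X Y. \<forall>h\<in>Hom C Y Z. \<forall>k\<in>Hom C W X.
          cmp C h (pl f g) = pl (cmp C h f) (cmp C h g) \<and>
          cmp C (pl f g) k = pl (cmp C f k) (cmp C g k))"

definition mzero :: "'m set \<Rightarrow> ('m \<Rightarrow> 'm \<Rightarrow> 'm) \<Rightarrow> 'm" where
  "mzero M pl = (THE z. z \<in> M \<and> (\<forall>x\<in>M. pl z x = x))"

definition endo_ring :: "('o,'m,'z) star_cat_scheme \<Rightarrow> ('m \<Rightarrow> 'm \<Rightarrow> 'm) \<Rightarrow> 'o \<Rightarrow> 'm ring" where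
  "endo_ring C pl A = \<lparr>carrier = Hom C A A, mult = cmp C, one = idt C A,
       zero = mzero (Hom C A A) pl, add = pl\<rparr>"

definition pos_cone_of :: "('o,'m,'z) star_cat_scheme \<Rightarrow> 'o \<Rightarrow> 'm set" where
  "pos_cone_of C A = {cmp C (str C x) x | x X. X \<in> obj C \<and> x \<in> Hom C A X}"

definition star_ring :: "('r,'b) ring_scheme \<Rightarrow> ('r \<Rightarrow> 'r) \<Rightarrow> bool" where
  "star_ring R iv \<longleftrightarrow> ring R \<and> (\<forall>r\<in>carrier R. iv r \<in> carrier R) \<and>
     iv \<one>\<^bsub>R\<^esub> = \<one>\<^bsub>R\<^esub> \<and>
     (\<forall>r\<in>carrier R. \<forall>s\<in>carrier R. iv (s \<otimes>\<^bsub>R\<^esub> r) = iv r \<otimes>\<^bsub>R\<^esub> iv s) \<and>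
     (\<forall>r\<in>carrier R. iv (iv r) = r) \<and>
     (\<forall>r\<in>carrier R. \<forall>s\<in>carrier R. iv (r \<oplus>\<^bsub>R\<^esub> s) = iv r \<oplus>\<^bsub>R\<^esub> iv s)"

definition anisotropic :: "('r,'b) ring_scheme \<Rightarrow> ('r \<Rightarrow> 'r) \<Rightarrow> bool" where
  "anisotropic R iv \<longleftrightarrow> (\<forall>r\<in>carrier R. iv r \<otimes>\<^bsub>R\<^esub> r = \<zero>\<^bsub>R\<^esub> \<longrightarrow> r = \<zero>\<^bsub>R\<^esub>)"

definition positive_cone :: "('r,'b) ring_scheme \<Rightarrow> ('r \<Rightarrow> 'r) \<Rightarrow> 'r set \<Rightarrow> bool" where
  "positive_cone R iv P \<longleftrightarrow>
     P \<subseteq> {a \<in> carrier R. iv a = a} \<and> \<one>\<^bsub>R\<^esub> \<in> P \<and>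
     (\<forall>a\<in>P. \<forall>b\<in>P. a \<oplus>\<^bsub>R\<^esub> b \<in> P) \<and>
     (\<forall>r\<in>carrier R. \<forall>a\<in>P. iv r \<otimes>\<^bsub>R\<^esub> a \<otimes>\<^bsub>R\<^esub> r \<in> P) \<and>
     P \<inter> (\<lambda>a. \<ominus>\<^bsub>R\<^esub> a) ` P = {\<zero>\<^bsub>R\<^esub>}"

definition ordered_star_ring :: "('r,'b) ring_scheme \<Rightarrow> ('r \<Rightarrow> 'r) \<Rightarrow> 'r set \<Rightarrow> bool" where
  "ordered_star_ring R iv P \<longleftrightarrow> star_ring R iv \<and> anisotropic R iv \<and> positive_cone R iv P"

definition right_module :: "('r,'b) ring_scheme \<Rightarrow> 'm set \<Rightarrow> ('m \<Rightarrow> 'm \<Rightarrow> 'm) \<Rightarrow> ('m \<Rightarrow> 'r \<Rightarrow> 'm) \<Rightarrow> bool" where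
  "right_module R M pl act \<longleftrightarrow> ring R \<and>
     (\<exists>z. comm_group \<lparr>carrier = M, mult = pl, one = z\<rparr>) \<and>
     (\<forall>x\<in>M. \<forall>r\<in>carrier R. act x r \<in> M) \<and>
     (\<forall>x\<in>M. \<forall>y\<in>M. \<forall>r\<in>carrier R. act (pl x y) r = pl (act x r) (act y r)) \<and>
     (\<forall>x\<in>M. \<forall>r\<in>carrier R. \<forall>s\<in>carrier R. act x (r \<oplus>\<^bsub>R\<^esub> s) = pl (act x r) (act x s)) \<and>
     (\<forall>x\<in>M. \<forall>r\<in>carrier R. \<forall>s\<in>carrier R. act x (r \<otimes>\<^bsub>R\<^esub> s) = act (act x r) s) \<and>
     (\<forall>x\<in>M. act x \<one>\<^bsub>R\<^esub> = x)"

definition inner_product_module ::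
  "('r,'b) ring_scheme \<Rightarrow> ('r \<Rightarrow> 'r) \<Rightarrow> 'r set \<Rightarrow> 'm set \<Rightarrow> ('m \<Rightarrow> 'm \<Rightarrow> 'm) \<Rightarrow> ('m \<Rightarrow> 'r \<Rightarrow> 'm)
     \<Rightarrow> ('m \<Rightarrow> 'm \<Rightarrow> 'r) \<Rightarrow> bool" where
  "inner_product_module R iv P M pl act ip \<longleftrightarrow>
     ordered_star_ring R iv P \<and> right_module R M pl act \<and>
     (\<forall>x\<in>M. \<forall>y\<in>M. ip x y \<in> carrier R) \<and>
     (\<forall>x\<in>M. \<forall>y\<in>M. \<forall>z\<in>M. \<forall>r\<in>carrier R.
        ip x (pl (act y r) z) = (ip x y \<otimes>\<^bsub>R\<^esub> r) \<oplus>\<^bsub>R\<^esub> ip x z) \<and>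
     (\<forall>x\<in>M. \<forall>y\<in>M. iv (ip x y) = ip y x) \<and>
     (\<forall>x\<in>M. ip x x \<in> P) \<and>
     (\<forall>x\<in>M. ip x x = \<zero>\<^bsub>R\<^esub> \<longrightarrow> x = mzero M pl)"

definition adjoint_of ::
  "'m set \<Rightarrow> 'n set \<Rightarrow> ('m \<Rightarrow> 'm \<Rightarrow> 'r) \<Rightarrow> ('n \<Rightarrow> 'n \<Rightarrow> 'r) \<Rightarrow> ('m \<Rightarrow> 'n) \<Rightarrow> ('n \<Rightarrow> 'm) \<Rightarrow> bool" where
  "adjoint_of M1 M2 ip1 ip2 f g \<longleftrightarrow>
     (\<forall>x\<in>M1. f x \<in> M2) \<and> (\<forall>y\<in>M2. g y \<in> M1) \<and>
     (\<forall>x\<in>M1. \<forall>y\<in>M2. ip1 (g y) x = ip2 y (f x))"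

end

theory Submission
  imports Defs
begin


locale ph =
  fixes C :: "('o,'m) star_cat"
  assumes PH: "pre_hilbert C"
begin

abbreviation cp (infixr "\<cdot>" 70) where "g \<cdot> f \<equiv> cmp C g f"
abbreviation st where "st f \<equiv> str C f"
abbreviation H where "H X Y \<equiv> Hom C X Y"
abbreviation Ob where "Ob \<equiv> obj C"
abbreviation I where "I X \<equiv> idt C X"

lemma SC: "is_star_category C" using PH unfolding pre_hilbert_def by blast
lemma CAT: "is_category C" using SC unfolding is_star_category_def by blast

lemma HomD: assumes "f \<in> H X Y" shows "f \<in> mor C" "dm C f = X" "cd C f = Y"
  using assms unfolding Hom_def by auto
lemma HomI: "f \<in> mor C \<Longrightarrow> f \<in> H (dm C f) (cd C f)" unfolding Hom_def by auto

lemma Hom_obj: assumes "f \<in> H X Y" shows "X \<in> Ob" "Y \<in> Ob"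
  using assms CAT unfolding Hom_def is_category_def by auto

lemma comp_Hom[intro]: "f \<in> H X Y \<Longrightarrow> g \<in> H Y Z \<Longrightarrow> g \<cdot> f \<in> H X Z"
  using CAT unfolding is_category_def Hom_def by auto

lemma assoc: "f \<in> H W X \<Longrightarrow> g \<in> H X Y \<Longrightarrow> h \<in> H Y Z \<Longrightarrow> h \<cdot> (g \<cdot> f) = (h \<cdot> g) \<cdot> f"
  using CAT unfolding is_category_def Hom_def by auto

lemma idl: "f \<in> H X Y \<Longrightarrow> I Y \<cdot> f = f"
  using CAT unfolding is_category_def Hom_def by auto
lemma idr: "f \<in> H X Y \<Longrightarrow> f \<cdot> I X = f"
  using CAT unfolding is_category_def Hom_def by auto
lemma id_Hom[intro]: "X \<in> Ob \<Longrightarrow> I X \<in> H X X"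
  using CAT unfolding is_category_def by auto

lemma st_Hom[intro]: "f \<in> H X Y \<Longrightarrow> st f \<in> H Y X"
  using SC unfolding is_star_category_def Hom_def by auto
lemma st_comp: "f \<in> H X Y \<Longrightarrow> g \<in> H Y Z \<Longrightarrow> st (g \<cdot> f) = st f \<cdot> st g"
  using SC unfolding is_star_category_def Hom_def by auto
lemma st_st: "f \<in> H X Y \<Longrightarrow> st (st f) = f"
  using SC unfolding is_star_category_def Hom_def by auto
lemma st_id: "X \<in> Ob \<Longrightarrow> st (I X) = I X"
  using SC unfolding is_star_category_def by auto

section \<open>Zero morphisms\<close>

definition Z0 where "Z0 = (SOME Z. zero_object C Z)"
lemma Z0: "zero_object C Z0"
  unfolding Z0_def using PH unfolding pre_hilbert_def by (metis someI_ex)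
lemma Z0_obj: "Z0 \<in> Ob" using Z0 unfolding zero_object_def by blast

definition zm where "zm X Y = (SOME b. b \<in> H Z0 Y) \<cdot> (SOME a. a \<in> H X Z0)"

lemma zo_in: assumes "zero_object C Z" "X \<in> Ob"
  shows "\<exists>a. a \<in> H X Z" "\<exists>b. b \<in> H Z X"
    "a \<in> H X Z \<Longrightarrow> a' \<in> H X Z \<Longrightarrow> a = a'"
    "b \<in> H Z X \<Longrightarrow> b' \<in> H Z X \<Longrightarrow> b = b'"
proof -
  have u1: "\<exists>!f. f \<in> H X Z" and u2: "\<exists>!f. f \<in> H Z X"
    using assms unfolding zero_object_def by auto
  show "\<exists>a. a \<in> H X Z" using u1 by (rule ex1_implies_ex)
  show "\<exists>b. b \<in> H Z X" using u2 by (rule ex1_implies_ex)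
  show "a \<in> H X Z \<Longrightarrow> a' \<in> H X Z \<Longrightarrow> a = a'" using u1 by auto
  show "b \<in> H Z X \<Longrightarrow> b' \<in> H Z X \<Longrightarrow> b = b'" using u2 by auto
qed

lemma zm_Hom[intro]: assumes "X \<in> Ob" "Y \<in> Ob" shows "zm X Y \<in> H X Y"
proof -
  have "(SOME a. a \<in> H X Z0) \<in> H X Z0" using zo_in(1)[OF Z0 assms(1)] by (metis someI_ex)
  moreover have "(SOME b. b \<in> H Z0 Y) \<in> H Z0 Y" using zo_in(2)[OF Z0 assms(2)] by (metis someI_ex)
  ultimately show ?thesis unfolding zm_def by blast
qed

lemma through_zero: assumes "zero_object C Z" "a \<in> H X Z" "b \<in> H Z Y"
  shows "b \<cdot> a = zm X Y"
proof -
  have X: "X \<in> Ob" and Y: "Y \<in> Ob" using assms Hom_obj by auto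
  define a0 where "a0 = (SOME a. a \<in> H X Z0)"
  define b0 where "b0 = (SOME b. b \<in> H Z0 Y)"
  have a0: "a0 \<in> H X Z0" unfolding a0_def using zo_in(1)[OF Z0 X] by (metis someI_ex)
  have b0: "b0 \<in> H Z0 Y" unfolding b0_def using zo_in(2)[OF Z0 Y] by (metis someI_ex)
  obtain c where c: "c \<in> H Z Z0" using zo_in(2)[OF assms(1) Z0_obj] by blast
  have "b0 \<cdot> c = b" using zo_in(4)[OF assms(1) Y] b0 c assms by blast
  moreover have "c \<cdot> a = a0" using zo_in(3)[OF Z0 X] a0 c assms by blast
  ultimately have "b \<cdot> a = b0 \<cdot> a0" using assoc[OF assms(2) c b0] by simp
  then show ?thesis unfolding zm_def a0_def b0_def .
qed

lemma zero_mor_iff: assumes "f \<in> H X Y" shows "zero_mor C f \<longleftrightarrow> f = zm X Y"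
proof
  assume "zero_mor C f"
  then have "\<exists>Z. zero_object C Z \<and> (\<exists>a b. a \<in> H (dm C f) Z \<and> b \<in> H Z (cd C f) \<and> f = b \<cdot> a)"
    unfolding zero_mor_def by (rule conjunct2)
  then obtain Z a b where "zero_object C Z" "a \<in> H (dm C f) Z" "b \<in> H Z (cd C f)" "f = b \<cdot> a"
    by (elim exE conjE)
  then show "f = zm X Y" using through_zero[of Z a X b Y] HomD[OF assms] by simp
next
  assume f: "f = zm X Y"
  have X: "X \<in> Ob" and Y: "Y \<in> Ob" using assms Hom_obj by auto
  have a: "(SOME a. a \<in> H X Z0) \<in> H X Z0" using zo_in(1)[OF Z0 X] by (metis someI_ex)
  have b: "(SOME b. b \<in> H Z0 Y) \<in> H Z0 Y" using zo_in(2)[OF Z0 Y] by (metis someI_ex)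
  have "f \<in> mor C" using HomD[OF assms] by simp
  moreover have "f = (SOME b. b \<in> H Z0 Y) \<cdot> (SOME a. a \<in> H X Z0)" using f unfolding zm_def .
  ultimately show "zero_mor C f" unfolding zero_mor_def
    apply -
    apply (rule conjI, assumption)
    apply (rule exI[of _ Z0], rule conjI[OF Z0])
    apply (rule exI[of _ "SOME a. a \<in> H X Z0"], rule exI[of _ "SOME b. b \<in> H Z0 Y"])
    using a b HomD[OF assms] by simp
qed

lemma zm_left: assumes "f \<in> H X Y" "Z \<in> Ob" shows "zm Y Z \<cdot> f = zm X Z"
proof -
  have Y: "Y \<in> Ob" using assms Hom_obj by auto
  have a: "(SOME a. a \<in> H Y Z0) \<in> H Y Z0" using zo_in(1)[OF Z0 Y] by (metis someI_ex)
  have b: "(SOME b. b \<in> H Z0 Z) \<in> H Z0 Z" using zo_in(2)[OF Z0 assms(2)] by (metis someI_ex)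
  have "zm Y Z \<cdot> f = (SOME b. b \<in> H Z0 Z) \<cdot> ((SOME a. a \<in> H Y Z0) \<cdot> f)"
    unfolding zm_def using assoc[OF assms(1) a b] by simp
  also have "\<dots> = zm X Z" using through_zero[OF Z0 comp_Hom[OF assms(1) a] b] .
  finally show ?thesis .
qed

lemma zm_right: assumes "g \<in> H Y Z" "X \<in> Ob" shows "g \<cdot> zm X Y = zm X Z"
proof -
  have Y: "Y \<in> Ob" using assms Hom_obj by auto
  have a: "(SOME a. a \<in> H X Z0) \<in> H X Z0" using zo_in(1)[OF Z0 assms(2)] by (metis someI_ex)
  have b: "(SOME b. b \<in> H Z0 Y) \<in> H Z0 Y" using zo_in(2)[OF Z0 Y] by (metis someI_ex)
  have "g \<cdot> zm X Y = (g \<cdot> (SOME b. b \<in> H Z0 Y)) \<cdot> (SOME a. a \<in> H X Z0)"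
    unfolding zm_def using assoc[OF a b assms(1)] by simp
  also have "\<dots> = zm X Z" using through_zero[OF Z0 a comp_Hom[OF b assms(1)]] .
  finally show ?thesis .
qed

lemma st_zm: assumes "X \<in> Ob" "Y \<in> Ob" shows "st (zm X Y) = zm Y X"
proof -
  have a: "(SOME a. a \<in> H X Z0) \<in> H X Z0" using zo_in(1)[OF Z0 assms(1)] by (metis someI_ex)
  have b: "(SOME b. b \<in> H Z0 Y) \<in> H Z0 Y" using zo_in(2)[OF Z0 assms(2)] by (metis someI_ex)
  have "st (zm X Y) = st (SOME a. a \<in> H X Z0) \<cdot> st (SOME b. b \<in> H Z0 Y)"
    unfolding zm_def using st_comp[OF a b] .
  also have "\<dots> = zm Y X" using through_zero[OF Z0 st_Hom[OF b] st_Hom[OF a]] .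
  finally show ?thesis .
qed

lemma st_zero_iff: assumes "f \<in> H X Y" shows "st f = zm Y X \<longleftrightarrow> f = zm X Y"
proof
  assume "st f = zm Y X"
  then have "st (st f) = st (zm Y X)" by simp
  then show "f = zm X Y" using st_st[OF assms] st_zm Hom_obj[OF assms] by simp
qed (use st_zm Hom_obj[OF assms] in simp)



section \<open>Biproducts\<close>

lemma bpD: assumes "biproduct C X1 X2 P s1 r1 s2 r2"
  shows "X1 \<in> Ob" "X2 \<in> Ob" "P \<in> Ob" "s1 \<in> H X1 P" "r1 \<in> H P X1" "s2 \<in> H X2 P" "r2 \<in> H P X2"
   "r1 \<cdot> s1 = I X1" "r2 \<cdot> s2 = I X2" "r2 \<cdot> s1 = zm X1 X2" "r1 \<cdot> s2 = zm X2 X1"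
   and bp_tup_all: "\<forall>W\<in>obj C. \<forall>f1\<in>Hom C W X1. \<forall>f2\<in>Hom C W X2.
        \<exists>!h. h \<in> Hom C W P \<and> cmp C r1 h = f1 \<and> cmp C r2 h = f2"
   and bp_cop_all: "\<forall>W\<in>obj C. \<forall>g1\<in>Hom C X1 W. \<forall>g2\<in>Hom C X2 W.
        \<exists>!h. h \<in> Hom C P W \<and> cmp C h s1 = g1 \<and> cmp C h s2 = g2"
proof -
  note B = assms[unfolded biproduct_def]
  show "X1 \<in> Ob" by (insert B, elim conjE, assumption)
  show "X2 \<in> Ob" by (insert B, elim conjE, assumption)
  show "P \<in> Ob" by (insert B, elim conjE, assumption)
  show s1: "s1 \<in> H X1 P" by (insert B, elim conjE, assumption)
  show r1: "r1 \<in> H P X1" by (insert B, elim conjE, assumption)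
  show s2: "s2 \<in> H X2 P" by (insert B, elim conjE, assumption)
  show r2: "r2 \<in> H P X2" by (insert B, elim conjE, assumption)
  show "r1 \<cdot> s1 = I X1" by (insert B, elim conjE, assumption)
  show "r2 \<cdot> s2 = I X2" by (insert B, elim conjE, assumption)
  have "zero_mor C (r2 \<cdot> s1)" by (insert B, elim conjE, assumption)
  then show "r2 \<cdot> s1 = zm X1 X2" using zero_mor_iff[OF comp_Hom[OF s1 r2]] by simp
  have "zero_mor C (r1 \<cdot> s2)" by (insert B, elim conjE, assumption)
  then show "r1 \<cdot> s2 = zm X2 X1" using zero_mor_iff[OF comp_Hom[OF s2 r1]] by simp
  show "\<forall>W\<in>obj C. \<forall>f1\<in>Hom C W X1. \<forall>f2\<in>Hom C W X2.
        \<exists>!h. h \<in> Hom C W P \<and> cmp C r1 h = f1 \<and> cmp C r2 h = f2" by (insert B, elim conjE, assumption)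
  show "\<forall>W\<in>obj C. \<forall>g1\<in>Hom C X1 W. \<forall>g2\<in>Hom C X2 W.
        \<exists>!h. h \<in> Hom C P W \<and> cmp C h s1 = g1 \<and> cmp C h s2 = g2" by (insert B, elim conjE, assumption)
qed

lemma bp_tup_ex: assumes "biproduct C X1 X2 P s1 r1 s2 r2" "f1 \<in> H W X1" "f2 \<in> H W X2"
  shows "\<exists>!h. h \<in> H W P \<and> r1 \<cdot> h = f1 \<and> r2 \<cdot> h = f2"
  using bp_tup_all[OF assms(1), rule_format, OF Hom_obj(1)[OF assms(2)] assms(2,3)] .

lemma bp_cop_ex: assumes "biproduct C X1 X2 P s1 r1 s2 r2" "f1 \<in> H X1 W" "f2 \<in> H X2 W"
  shows "\<exists>!h. h \<in> H P W \<and> h \<cdot> s1 = f1 \<and> h \<cdot> s2 = f2"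
  using bp_cop_all[OF assms(1), rule_format, OF Hom_obj(2)[OF assms(2)] assms(2,3)] .

definition tup where "tup P r1 r2 f g = (THE h. h \<in> H (dm C f) P \<and> r1 \<cdot> h = f \<and> r2 \<cdot> h = g)"
definition cop where "cop P s1 s2 f g = (THE h. h \<in> H P (cd C f) \<and> h \<cdot> s1 = f \<and> h \<cdot> s2 = g)"

lemma tup: assumes "biproduct C X1 X2 P s1 r1 s2 r2" "f1 \<in> H W X1" "f2 \<in> H W X2"
  shows "tup P r1 r2 f1 f2 \<in> H W P" "r1 \<cdot> tup P r1 r2 f1 f2 = f1" "r2 \<cdot> tup P r1 r2 f1 f2 = f2"
proof -
  have d: "dm C f1 = W" using HomD[OF assms(2)] by simp
  have "tup P r1 r2 f1 f2 \<in> H W P \<and> r1 \<cdot> tup P r1 r2 f1 f2 = f1 \<and> r2 \<cdot> tup P r1 r2 f1 f2 = f2"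
    unfolding tup_def d by (rule theI'[OF bp_tup_ex[OF assms]])
  then show "tup P r1 r2 f1 f2 \<in> H W P" "r1 \<cdot> tup P r1 r2 f1 f2 = f1" "r2 \<cdot> tup P r1 r2 f1 f2 = f2"
    by auto
qed

lemma tup_uniq: assumes "biproduct C X1 X2 P s1 r1 s2 r2" "h \<in> H W P"
  shows "h = tup P r1 r2 (r1 \<cdot> h) (r2 \<cdot> h)"
proof -
  have a: "r1 \<cdot> h \<in> H W X1" "r2 \<cdot> h \<in> H W X2" using bpD[OF assms(1)] assms(2) by blast+
  have d: "dm C (r1 \<cdot> h) = W" using HomD[OF a(1)] by simp
  show ?thesis unfolding tup_def d
    by (rule the1_equality[OF bp_tup_ex[OF assms(1) a], symmetric]) (use assms in auto)
qed

lemma tup_eq: assumes "biproduct C X1 X2 P s1 r1 s2 r2" "h \<in> H W P" "h' \<in> H W P"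
  "r1 \<cdot> h = r1 \<cdot> h'" "r2 \<cdot> h = r2 \<cdot> h'" shows "h = h'"
  using tup_uniq[OF assms(1,2)] tup_uniq[OF assms(1,3)] assms(4,5) by simp

lemma cop: assumes "biproduct C X1 X2 P s1 r1 s2 r2" "f1 \<in> H X1 W" "f2 \<in> H X2 W"
  shows "cop P s1 s2 f1 f2 \<in> H P W" "cop P s1 s2 f1 f2 \<cdot> s1 = f1" "cop P s1 s2 f1 f2 \<cdot> s2 = f2"
proof -
  have d: "cd C f1 = W" using HomD[OF assms(2)] by simp
  have "cop P s1 s2 f1 f2 \<in> H P W \<and> cop P s1 s2 f1 f2 \<cdot> s1 = f1 \<and> cop P s1 s2 f1 f2 \<cdot> s2 = f2"
    unfolding cop_def d by (rule theI'[OF bp_cop_ex[OF assms]])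
  then show "cop P s1 s2 f1 f2 \<in> H P W" "cop P s1 s2 f1 f2 \<cdot> s1 = f1" "cop P s1 s2 f1 f2 \<cdot> s2 = f2"
    by auto
qed

lemma cop_uniq: assumes "biproduct C X1 X2 P s1 r1 s2 r2" "h \<in> H P W"
  shows "h = cop P s1 s2 (h \<cdot> s1) (h \<cdot> s2)"
proof -
  have a: "h \<cdot> s1 \<in> H X1 W" "h \<cdot> s2 \<in> H X2 W" using bpD[OF assms(1)] assms(2) by blast+
  have d: "cd C (h \<cdot> s1) = W" using HomD[OF a(1)] by simp
  show ?thesis unfolding cop_def d
    by (rule the1_equality[OF bp_cop_ex[OF assms(1) a], symmetric]) (use assms in auto)
qed

lemma cop_eq: assumes "biproduct C X1 X2 P s1 r1 s2 r2" "h \<in> H P W" "h' \<in> H P W"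
  "h \<cdot> s1 = h' \<cdot> s1" "h \<cdot> s2 = h' \<cdot> s2" shows "h = h'"
  using cop_uniq[OF assms(1,2)] cop_uniq[OF assms(1,3)] assms(4,5) by simp

lemma cop_comp: assumes "biproduct C X1 X2 P s1 r1 s2 r2" "f1 \<in> H X1 W" "f2 \<in> H X2 W" "k \<in> H W V"
  shows "k \<cdot> cop P s1 s2 f1 f2 = cop P s1 s2 (k \<cdot> f1) (k \<cdot> f2)"
proof -
  note c = cop[OF assms(1-3)]
  have "k \<cdot> cop P s1 s2 f1 f2 \<in> H P V" using c assms by blast
  then have "k \<cdot> cop P s1 s2 f1 f2 = cop P s1 s2 ((k \<cdot> cop P s1 s2 f1 f2) \<cdot> s1) ((k \<cdot> cop P s1 s2 f1 f2) \<cdot> s2)"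
    by (rule cop_uniq[OF assms(1)])
  also have "\<dots> = cop P s1 s2 (k \<cdot> f1) (k \<cdot> f2)"
    using assoc[OF bpD(4)[OF assms(1)] c(1) assms(4)] assoc[OF bpD(6)[OF assms(1)] c(1) assms(4)] c by simp
  finally show ?thesis .
qed

lemma tup_comp: assumes "biproduct C X1 X2 P s1 r1 s2 r2" "f1 \<in> H W X1" "f2 \<in> H W X2" "k \<in> H V W"
  shows "tup P r1 r2 f1 f2 \<cdot> k = tup P r1 r2 (f1 \<cdot> k) (f2 \<cdot> k)"
proof -
  note c = tup[OF assms(1-3)]
  have "tup P r1 r2 f1 f2 \<cdot> k \<in> H V P" using c assms by blast
  then have "tup P r1 r2 f1 f2 \<cdot> k = tup P r1 r2 (r1 \<cdot> (tup P r1 r2 f1 f2 \<cdot> k)) (r2 \<cdot> (tup P r1 r2 f1 f2 \<cdot> k))"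
    by (rule tup_uniq[OF assms(1)])
  also have "\<dots> = tup P r1 r2 (f1 \<cdot> k) (f2 \<cdot> k)"
    using assoc[OF assms(4) c(1) bpD(5)[OF assms(1)]] assoc[OF assms(4) c(1) bpD(7)[OF assms(1)]] c by simp
  finally show ?thesis .
qed

section \<open>Chosen orthonormal biproducts\<close>

definition bq where "bq X Y = (SOME t. orthonormal_biproduct C X Y (fst t) (fst (snd t)) (snd (snd t)))"
definition PP where "PP X Y = fst (bq X Y)"
definition in1 where "in1 X Y = fst (snd (bq X Y))"
definition in2 where "in2 X Y = snd (snd (bq X Y))"

lemma bq: assumes "X \<in> Ob" "Y \<in> Ob"
  shows "biproduct C X Y (PP X Y) (in1 X Y) (st (in1 X Y)) (in2 X Y) (st (in2 X Y))"
proof -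
  have "\<exists>P s1 s2. orthonormal_biproduct C X Y P s1 s2" using PH assms unfolding pre_hilbert_def by blast
  then have "\<exists>t. orthonormal_biproduct C X Y (fst t) (fst (snd t)) (snd (snd t))" by auto
  then have "orthonormal_biproduct C X Y (PP X Y) (in1 X Y) (in2 X Y)"
    unfolding PP_def in1_def in2_def bq_def by (rule someI_ex)
  then show ?thesis unfolding orthonormal_biproduct_def .
qed

abbreviation "PX X \<equiv> PP X X"
abbreviation "j1 X \<equiv> in1 X X"
abbreviation "j2 X \<equiv> in2 X X"
definition cpX where "cpX X f g = cop (PX X) (j1 X) (j2 X) f g"
definition tpX where "tpX X f g = tup (PX X) (st (j1 X)) (st (j2 X)) f g"
definition dg where "dg X = tpX X (I X) (I X)"
definition cdg where "cdg X = cpX X (I X) (I X)"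
definition padd where "padd f g = cpX (dm C f) f g \<cdot> dg (dm C f)"
definition padd2 where "padd2 f g = cdg (cd C f) \<cdot> tpX (cd C f) f g"

lemma bqX: "X \<in> Ob \<Longrightarrow> biproduct C X X (PX X) (j1 X) (st (j1 X)) (j2 X) (st (j2 X))"
  using bq by blast

lemma cpX: assumes "f \<in> H X Y" "g \<in> H X Y"
  shows "cpX X f g \<in> H (PX X) Y" "cpX X f g \<cdot> j1 X = f" "cpX X f g \<cdot> j2 X = g"
  using cop[OF bqX[OF Hom_obj(1)[OF assms(1)]] assms] unfolding cpX_def by auto

lemma tpX: assumes "f \<in> H X Y" "g \<in> H X Y"
  shows "tpX Y f g \<in> H X (PX Y)" "st (j1 Y) \<cdot> tpX Y f g = f" "st (j2 Y) \<cdot> tpX Y f g = g"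
  using tup[OF bqX[OF Hom_obj(2)[OF assms(1)]] assms] unfolding tpX_def by auto

lemma dg: assumes "X \<in> Ob" shows "dg X \<in> H X (PX X)" "st (j1 X) \<cdot> dg X = I X" "st (j2 X) \<cdot> dg X = I X"
  using tpX[OF id_Hom[OF assms] id_Hom[OF assms]] unfolding dg_def by auto

lemma cdg: assumes "X \<in> Ob" shows "cdg X \<in> H (PX X) X" "cdg X \<cdot> j1 X = I X" "cdg X \<cdot> j2 X = I X"
  using cpX[OF id_Hom[OF assms] id_Hom[OF assms]] unfolding cdg_def by auto

lemma add_Hom[intro]: assumes "f \<in> H X Y" "g \<in> H X Y" shows "padd f g \<in> H X Y"
  using cpX[OF assms] dg[OF Hom_obj(1)[OF assms(1)]] HomD[OF assms(1)] unfolding padd_def by auto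

lemma add2_Hom: assumes "f \<in> H X Y" "g \<in> H X Y" shows "padd2 f g \<in> H X Y"
  using tpX[OF assms] cdg[OF Hom_obj(2)[OF assms(1)]] HomD[OF assms(1)] unfolding padd2_def by auto



lemma add_zero_r: assumes "f \<in> H X Y" shows "padd f (zm X Y) = f"
proof -
  have X: "X \<in> Ob" and Y: "Y \<in> Ob" using Hom_obj assms by auto
  note B = bqX[OF X]
  have fr: "f \<cdot> st (j1 X) \<in> H (PX X) Y" using bpD(5)[OF B] assms by blast
  have "f \<cdot> st (j1 X) = cpX X f (zm X Y)"
  proof -
    have "f \<cdot> st (j1 X) = cop (PX X) (j1 X) (j2 X) ((f \<cdot> st (j1 X)) \<cdot> j1 X) ((f \<cdot> st (j1 X)) \<cdot> j2 X)"
      by (rule cop_uniq[OF B fr])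
    also have "(f \<cdot> st (j1 X)) \<cdot> j1 X = f"
      using assoc[OF bpD(4)[OF B] bpD(5)[OF B] assms] bpD(8)[OF B] idr[OF assms] by simp
    also have "(f \<cdot> st (j1 X)) \<cdot> j2 X = zm X Y"
      using assoc[OF bpD(6)[OF B] bpD(5)[OF B] assms] bpD(11)[OF B] zm_right[OF assms X] by simp
    finally show ?thesis unfolding cpX_def .
  qed
  then have "padd f (zm X Y) = (f \<cdot> st (j1 X)) \<cdot> dg X" unfolding padd_def HomD[OF assms] by simp
  also have "\<dots> = f" using assoc[OF dg(1)[OF X] bpD(5)[OF B] assms] dg(2)[OF X] idr[OF assms] by simp
  finally show ?thesis .
qed

lemma add_zero_l: assumes "f \<in> H X Y" shows "padd (zm X Y) f = f"
proof -
  have X: "X \<in> Ob" and Y: "Y \<in> Ob" using Hom_obj assms by auto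
  note B = bqX[OF X]
  have fr: "f \<cdot> st (j2 X) \<in> H (PX X) Y" using bpD(7)[OF B] assms by blast
  have "f \<cdot> st (j2 X) = cpX X (zm X Y) f"
  proof -
    have "f \<cdot> st (j2 X) = cop (PX X) (j1 X) (j2 X) ((f \<cdot> st (j2 X)) \<cdot> j1 X) ((f \<cdot> st (j2 X)) \<cdot> j2 X)"
      by (rule cop_uniq[OF B fr])
    also have "(f \<cdot> st (j2 X)) \<cdot> j2 X = f"
      using assoc[OF bpD(6)[OF B] bpD(7)[OF B] assms] bpD(9)[OF B] idr[OF assms] by simp
    also have "(f \<cdot> st (j2 X)) \<cdot> j1 X = zm X Y"
      using assoc[OF bpD(4)[OF B] bpD(7)[OF B] assms] bpD(10)[OF B] zm_right[OF assms X] by simp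
    finally show ?thesis unfolding cpX_def .
  qed
  moreover have "dm C (zm X Y) = X" using HomD[OF zm_Hom[OF X Y]] by simp
  ultimately have "padd (zm X Y) f = (f \<cdot> st (j2 X)) \<cdot> dg X" unfolding padd_def by simp
  also have "\<dots> = f" using assoc[OF dg(1)[OF X] bpD(7)[OF B] assms] dg(3)[OF X] idr[OF assms] by simp
  finally show ?thesis .
qed

lemma add2_zero_r: assumes "f \<in> H X Y" shows "padd2 f (zm X Y) = f"
proof -
  have X: "X \<in> Ob" and Y: "Y \<in> Ob" using Hom_obj assms by auto
  note B = bqX[OF Y]
  have fr: "j1 Y \<cdot> f \<in> H X (PX Y)" using bpD(4)[OF B] assms by blast
  have "j1 Y \<cdot> f = tpX Y f (zm X Y)"
  proof -
    have "j1 Y \<cdot> f = tup (PX Y) (st (j1 Y)) (st (j2 Y)) (st (j1 Y) \<cdot> (j1 Y \<cdot> f)) (st (j2 Y) \<cdot> (j1 Y \<cdot> f))"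
      by (rule tup_uniq[OF B fr])
    also have "st (j1 Y) \<cdot> (j1 Y \<cdot> f) = f"
      using assoc[OF assms bpD(4)[OF B] bpD(5)[OF B]] bpD(8)[OF B] idl[OF assms] by simp
    also have "st (j2 Y) \<cdot> (j1 Y \<cdot> f) = zm X Y"
      using assoc[OF assms bpD(4)[OF B] bpD(7)[OF B]] bpD(10)[OF B] zm_left[OF assms Y] by simp
    finally show ?thesis unfolding tpX_def .
  qed
  then have "padd2 f (zm X Y) = cdg Y \<cdot> (j1 Y \<cdot> f)" unfolding padd2_def HomD[OF assms] by simp
  also have "\<dots> = f" using assoc[OF assms bpD(4)[OF B] cdg(1)[OF Y]] cdg(2)[OF Y] idl[OF assms] by simp
  finally show ?thesis .
qed

lemma add2_zero_l: assumes "f \<in> H X Y" shows "padd2 (zm X Y) f = f"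
proof -
  have X: "X \<in> Ob" and Y: "Y \<in> Ob" using Hom_obj assms by auto
  note B = bqX[OF Y]
  have fr: "j2 Y \<cdot> f \<in> H X (PX Y)" using bpD(6)[OF B] assms by blast
  have "j2 Y \<cdot> f = tpX Y (zm X Y) f"
  proof -
    have "j2 Y \<cdot> f = tup (PX Y) (st (j1 Y)) (st (j2 Y)) (st (j1 Y) \<cdot> (j2 Y \<cdot> f)) (st (j2 Y) \<cdot> (j2 Y \<cdot> f))"
      by (rule tup_uniq[OF B fr])
    also have "st (j2 Y) \<cdot> (j2 Y \<cdot> f) = f"
      using assoc[OF assms bpD(6)[OF B] bpD(7)[OF B]] bpD(9)[OF B] idl[OF assms] by simp
    also have "st (j1 Y) \<cdot> (j2 Y \<cdot> f) = zm X Y"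
      using assoc[OF assms bpD(6)[OF B] bpD(5)[OF B]] bpD(11)[OF B] zm_left[OF assms Y] by simp
    finally show ?thesis unfolding tpX_def .
  qed
  moreover have "cd C (zm X Y) = Y" using HomD[OF zm_Hom[OF X Y]] by simp
  ultimately have "padd2 (zm X Y) f = cdg Y \<cdot> (j2 Y \<cdot> f)" unfolding padd2_def by simp
  also have "\<dots> = f" using assoc[OF assms bpD(6)[OF B] cdg(1)[OF Y]] cdg(3)[OF Y] idl[OF assms] by simp
  finally show ?thesis .
qed

lemma interchange: assumes a: "a \<in> H X Y" and b: "b \<in> H X Y" and c: "c \<in> H X Y" and d: "d \<in> H X Y"
  shows "padd2 (padd a b) (padd c d) = padd (padd2 a c) (padd2 b d)"
proof -
  have X: "X \<in> Ob" and Y: "Y \<in> Ob" using Hom_obj a by auto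
  note BX = bqX[OF X] and BY = bqX[OF Y]
  note tac = tpX[OF a c] and tbd = tpX[OF b d]
  define M where "M = cpX X (tpX Y a c) (tpX Y b d)"
  have M: "M \<in> H (PX X) (PX Y)" "M \<cdot> j1 X = tpX Y a c" "M \<cdot> j2 X = tpX Y b d"
    using cpX[OF tac(1) tbd(1)] unfolding M_def by auto
  have r1M: "st (j1 Y) \<cdot> M = cpX X a b"
    unfolding M_def cpX_def using cop_comp[OF BX tac(1) tbd(1) bpD(5)[OF BY]] tac tbd by simp
  have r2M: "st (j2 Y) \<cdot> M = cpX X c d"
    unfolding M_def cpX_def using cop_comp[OF BX tac(1) tbd(1) bpD(7)[OF BY]] tac tbd by simp
  have MD: "M \<cdot> dg X \<in> H X (PX Y)" using M(1) dg(1)[OF X] by blast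
  have "M \<cdot> dg X = tpX Y (st (j1 Y) \<cdot> (M \<cdot> dg X)) (st (j2 Y) \<cdot> (M \<cdot> dg X))"
    unfolding tpX_def by (rule tup_uniq[OF BY MD])
  also have "st (j1 Y) \<cdot> (M \<cdot> dg X) = padd a b"
    using assoc[OF dg(1)[OF X] M(1) bpD(5)[OF BY]] r1M HomD[OF a] unfolding padd_def by simp
  also have "st (j2 Y) \<cdot> (M \<cdot> dg X) = padd c d"
    using assoc[OF dg(1)[OF X] M(1) bpD(7)[OF BY]] r2M HomD[OF c] unfolding padd_def by simp
  finally have e1: "M \<cdot> dg X = tpX Y (padd a b) (padd c d)" .
  have cM: "cdg Y \<cdot> M = cpX X (padd2 a c) (padd2 b d)"
    unfolding M_def cpX_def using cop_comp[OF BX tac(1) tbd(1) cdg(1)[OF Y]] HomD[OF a] HomD[OF b]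
    unfolding padd2_def by simp
  have "padd2 (padd a b) (padd c d) = cdg Y \<cdot> (M \<cdot> dg X)"
    using e1 HomD[OF add_Hom[OF a b]] unfolding padd2_def by simp
  also have "\<dots> = (cdg Y \<cdot> M) \<cdot> dg X" using assoc[OF dg(1)[OF X] M(1) cdg(1)[OF Y]] .
  also have "\<dots> = padd (padd2 a c) (padd2 b d)" using cM HomD[OF add2_Hom[OF a c]] unfolding padd_def by simp
  finally show ?thesis .
qed

lemma add_eq_add2: assumes a: "a \<in> H X Y" and b: "b \<in> H X Y" shows "padd a b = padd2 a b"
proof -
  have X: "X \<in> Ob" and Y: "Y \<in> Ob" using Hom_obj a by auto
  note z = zm_Hom[OF X Y]
  have "padd a b = padd (padd2 a (zm X Y)) (padd2 (zm X Y) b)" using add2_zero_r[OF a] add2_zero_l[OF b] by simp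
  also have "\<dots> = padd2 (padd a (zm X Y)) (padd (zm X Y) b)" using interchange[OF a z z b] by simp
  also have "\<dots> = padd2 a b" using add_zero_r[OF a] add_zero_l[OF b] by simp
  finally show ?thesis .
qed

lemma add_comm: assumes a: "a \<in> H X Y" and b: "b \<in> H X Y" shows "padd a b = padd b a"
proof -
  have X: "X \<in> Ob" and Y: "Y \<in> Ob" using Hom_obj a by auto
  note z = zm_Hom[OF X Y]
  have "padd a b = padd (padd2 (zm X Y) a) (padd2 b (zm X Y))" using add2_zero_r[OF b] add2_zero_l[OF a] by simp
  also have "\<dots> = padd2 (padd (zm X Y) b) (padd a (zm X Y))" using interchange[OF z b a z] by simp
  also have "\<dots> = padd2 b a" using add_zero_r[OF a] add_zero_l[OF b] by simp
  finally show ?thesis using add_eq_add2[OF b a] by simp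
qed

lemma add_assoc: assumes a: "a \<in> H X Y" and b: "b \<in> H X Y" and c: "c \<in> H X Y"
  shows "padd (padd a b) c = padd a (padd b c)"
proof -
  have X: "X \<in> Ob" and Y: "Y \<in> Ob" using Hom_obj a by auto
  note z = zm_Hom[OF X Y]
  have "padd (padd a b) c = padd (padd2 a b) (padd2 (zm X Y) c)" using add2_zero_l[OF c] add_eq_add2[OF a b] by simp
  also have "\<dots> = padd2 (padd a (zm X Y)) (padd b c)" using interchange[OF a z b c] by simp
  also have "\<dots> = padd2 a (padd b c)" using add_zero_r[OF a] by simp
  finally show ?thesis using add_eq_add2[OF a add_Hom[OF b c]] by simp
qed

lemma comp_add: assumes f: "f \<in> H X Y" and g: "g \<in> H X Y" and h: "h \<in> H Y Z"
  shows "h \<cdot> padd f g = padd (h \<cdot> f) (h \<cdot> g)"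
proof -
  have X: "X \<in> Ob" using Hom_obj f by auto
  have "h \<cdot> padd f g = (h \<cdot> cpX X f g) \<cdot> dg X"
    unfolding padd_def HomD[OF f] using assoc[OF dg(1)[OF X] cpX(1)[OF f g] h] .
  also have "h \<cdot> cpX X f g = cpX X (h \<cdot> f) (h \<cdot> g)"
    unfolding cpX_def by (rule cop_comp[OF bqX[OF X] f g h])
  finally show ?thesis unfolding padd_def using HomD[OF comp_Hom[OF f h]] by simp
qed

lemma add_comp: assumes f: "f \<in> H X Y" and g: "g \<in> H X Y" and k: "k \<in> H W X"
  shows "padd f g \<cdot> k = padd (f \<cdot> k) (g \<cdot> k)"
proof -
  have Y: "Y \<in> Ob" using Hom_obj f by auto
  have "padd f g \<cdot> k = cdg Y \<cdot> (tpX Y f g \<cdot> k)"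
    unfolding add_eq_add2[OF f g] padd2_def HomD[OF f] using assoc[OF k tpX(1)[OF f g] cdg(1)[OF Y]] by simp
  also have "tpX Y f g \<cdot> k = tpX Y (f \<cdot> k) (g \<cdot> k)"
    unfolding tpX_def by (rule tup_comp[OF bqX[OF Y] f g k])
  finally show ?thesis using add_eq_add2[OF comp_Hom[OF k f] comp_Hom[OF k g]]
    unfolding padd2_def using HomD[OF comp_Hom[OF k f]] by simp
qed

lemma st_add: assumes f: "f \<in> H X Y" and g: "g \<in> H X Y" shows "st (padd f g) = padd (st f) (st g)"
proof -
  have X: "X \<in> Ob" using Hom_obj f by auto
  note B = bqX[OF X]
  have sd: "st (dg X) = cdg X"
  proof -
    have sH: "st (dg X) \<in> H (PX X) X" using dg(1)[OF X] by blast
    have "st (dg X) \<cdot> j1 X = I X"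
      using st_comp[OF dg(1)[OF X] bpD(5)[OF B]] st_st[OF bpD(4)[OF B]] dg(2)[OF X] st_id[OF X] by simp
    moreover have "st (dg X) \<cdot> j2 X = I X"
      using st_comp[OF dg(1)[OF X] bpD(7)[OF B]] st_st[OF bpD(6)[OF B]] dg(3)[OF X] st_id[OF X] by simp
    ultimately show ?thesis using cop_uniq[OF B sH] unfolding cdg_def cpX_def by simp
  qed
  have sc: "st (cpX X f g) = tpX X (st f) (st g)"
  proof -
    have sH: "st (cpX X f g) \<in> H Y (PX X)" using cpX(1)[OF f g] by blast
    have "st (j1 X) \<cdot> st (cpX X f g) = st f" using st_comp[OF bpD(4)[OF B] cpX(1)[OF f g]] cpX(2)[OF f g] by simp
    moreover have "st (j2 X) \<cdot> st (cpX X f g) = st g" using st_comp[OF bpD(6)[OF B] cpX(1)[OF f g]] cpX(3)[OF f g] by simp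
    ultimately show ?thesis using tup_uniq[OF B sH] unfolding tpX_def by simp
  qed
  have "st (padd f g) = cdg X \<cdot> tpX X (st f) (st g)"
    unfolding padd_def HomD[OF f] using st_comp[OF dg(1)[OF X] cpX(1)[OF f g]] sd sc by simp
  also have "\<dots> = padd2 (st f) (st g)" unfolding padd2_def using HomD[OF st_Hom[OF f]] by simp
  finally show ?thesis using add_eq_add2[OF st_Hom[OF f] st_Hom[OF g]] by simp
qed

lemma bp_sum: assumes B: "biproduct C X1 X2 P s1 r1 s2 r2"
  shows "padd (s1 \<cdot> r1) (s2 \<cdot> r2) = I P"
proof -
  note b = bpD[OF B]
  have h1: "s1 \<cdot> r1 \<in> H P P" "s2 \<cdot> r2 \<in> H P P" using b by blast+
  have "r1 \<cdot> padd (s1 \<cdot> r1) (s2 \<cdot> r2) = padd (r1 \<cdot> (s1 \<cdot> r1)) (r1 \<cdot> (s2 \<cdot> r2))"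
    using comp_add[OF h1 b(5)] .
  also have "\<dots> = padd r1 (zm P X1)" using assoc[OF b(5) b(4) b(5)] assoc[OF b(7) b(6) b(5)] b(8) b(11)
      idl[OF b(5)] zm_left[OF b(7) b(1)] by simp
  also have "\<dots> = r1" using add_zero_r[OF b(5)] .
  finally have e1: "r1 \<cdot> padd (s1 \<cdot> r1) (s2 \<cdot> r2) = r1 \<cdot> I P" using idr[OF b(5)] by simp
  have "r2 \<cdot> padd (s1 \<cdot> r1) (s2 \<cdot> r2) = padd (r2 \<cdot> (s1 \<cdot> r1)) (r2 \<cdot> (s2 \<cdot> r2))"
    using comp_add[OF h1 b(7)] .
  also have "\<dots> = padd (zm P X2) r2" using assoc[OF b(5) b(4) b(7)] assoc[OF b(7) b(6) b(7)] b(9) b(10)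
      idl[OF b(7)] zm_left[OF b(5) b(2)] by simp
  also have "\<dots> = r2" using add_zero_l[OF b(7)] .
  finally have e2: "r2 \<cdot> padd (s1 \<cdot> r1) (s2 \<cdot> r2) = r2 \<cdot> I P" using idr[OF b(7)] by simp
  show ?thesis by (rule tup_eq[OF B add_Hom[OF h1] id_Hom[OF b(3)] e1 e2])
qed



lemma bp_expand: assumes B: "biproduct C X1 X2 P s1 r1 s2 r2" and F: "F \<in> H P Y" and t: "t \<in> H W P"
  shows "F \<cdot> t = padd ((F \<cdot> s1) \<cdot> (r1 \<cdot> t)) ((F \<cdot> s2) \<cdot> (r2 \<cdot> t))"
proof -
  note b = bpD[OF B]
  have h1: "s1 \<cdot> r1 \<in> H P P" "s2 \<cdot> r2 \<in> H P P" using b by blast+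
  have "F \<cdot> t = F \<cdot> (padd (s1 \<cdot> r1) (s2 \<cdot> r2) \<cdot> t)" using bp_sum[OF B] idl[OF t] by simp
  also have "\<dots> = F \<cdot> padd ((s1 \<cdot> r1) \<cdot> t) ((s2 \<cdot> r2) \<cdot> t)" using add_comp[OF h1 t] by simp
  also have "\<dots> = padd (F \<cdot> ((s1 \<cdot> r1) \<cdot> t)) (F \<cdot> ((s2 \<cdot> r2) \<cdot> t))"
    by (rule comp_add[OF comp_Hom[OF t h1(1)] comp_Hom[OF t h1(2)] F])
  also have "F \<cdot> ((s1 \<cdot> r1) \<cdot> t) = (F \<cdot> s1) \<cdot> (r1 \<cdot> t)"
    using assoc[OF t b(5) b(4), symmetric] assoc[OF comp_Hom[OF t b(5)] b(4) F] by simp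
  also have "F \<cdot> ((s2 \<cdot> r2) \<cdot> t) = (F \<cdot> s2) \<cdot> (r2 \<cdot> t)"
    using assoc[OF t b(7) b(6), symmetric] assoc[OF comp_Hom[OF t b(7)] b(6) F] by simp
  finally show ?thesis .
qed

lemma PH_R3: "\<forall>f\<in>mor C. \<exists>m. kernel C f m \<and> st m \<cdot> m = I (dm C m)"
  by (insert PH[unfolded pre_hilbert_def], elim conjE, assumption)
lemma PH_R4: "\<forall>X\<in>obj C. \<forall>P s1 s2 d. orthonormal_biproduct C X X P s1 s2 \<longrightarrow> d \<in> Hom C X P \<longrightarrow>
        cmp C (str C s1) d = idt C X \<longrightarrow> cmp C (str C s2) d = idt C X \<longrightarrow>
        (\<exists>f\<in>mor C. kernel C f d)"
  by (insert PH[unfolded pre_hilbert_def], elim conjE, assumption)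

lemma kerD: assumes K: "kernel C F m" and F: "F \<in> H P Y" and m: "m \<in> H K P"
  shows "F \<cdot> m = zm K Y" "\<And>g W. g \<in> H W P \<Longrightarrow> F \<cdot> g = zm W Y \<Longrightarrow> \<exists>!h. h \<in> H W K \<and> m \<cdot> h = g"
proof -
  have z: "zero_mor C (F \<cdot> m)" by (insert K[unfolded kernel_def], elim conjE, assumption)
  then show "F \<cdot> m = zm K Y" using zero_mor_iff[OF comp_Hom[OF m F]] by simp
  fix g W assume g: "g \<in> H W P" and Fg: "F \<cdot> g = zm W Y"
  have all: "\<forall>g\<in>mor C. cd C g = dm C F \<longrightarrow> zero_mor C (F \<cdot> g) \<longrightarrow>
        (\<exists>!h. h \<in> H (dm C g) (dm C m) \<and> m \<cdot> h = g)" by (insert K[unfolded kernel_def], elim conjE, assumption)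
  have "zero_mor C (F \<cdot> g)" using zero_mor_iff[OF comp_Hom[OF g F]] Fg by simp
  moreover have "g \<in> mor C" "cd C g = dm C F" using HomD[OF g] HomD[OF F] by auto
  ultimately have "\<exists>!h. h \<in> H (dm C g) (dm C m) \<and> m \<cdot> h = g" using all by blast
  then show "\<exists>!h. h \<in> H W K \<and> m \<cdot> h = g" using HomD[OF g] HomD[OF m] by simp
qed

lemma R3: assumes F: "F \<in> H P Y" shows "\<exists>K m. m \<in> H K P \<and> kernel C F m \<and> st m \<cdot> m = I K"
proof -
  from PH_R3 obtain m where m: "kernel C F m" "st m \<cdot> m = I (dm C m)" using HomD[OF F] by blast
  have "m \<in> mor C" "cd C m = dm C F" by (insert m(1)[unfolded kernel_def], elim conjE, assumption)+
  then have "m \<in> mor C" "cd C m = P" using HomD[OF F] by auto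
  then have "m \<in> H (dm C m) P" unfolding Hom_def by simp
  then show ?thesis using m by blast
qed

lemma R4: assumes X: "X \<in> Ob" shows "\<exists>F Y. F \<in> H (PX X) Y \<and> kernel C F (dg X)"
proof -
  note PH_R4
  moreover have "orthonormal_biproduct C X X (PX X) (j1 X) (j2 X)"
    using bqX[OF X] unfolding orthonormal_biproduct_def .
  ultimately obtain F where F: "F \<in> mor C" "kernel C F (dg X)" using dg[OF X] X by blast
  have "cd C (dg X) = dm C F" by (insert F(2)[unfolded kernel_def], elim conjE, assumption)
  then have "dm C F = PX X" using HomD[OF dg(1)[OF X]] by auto
  then have "F \<in> H (PX X) (cd C F)" using F(1) unfolding Hom_def by simp
  then show ?thesis using F by blast
qed

lemma R4_diag: assumes X: "X \<in> Ob" and F: "F \<in> H (PX X) Y" and K: "kernel C F (dg X)"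
  and g1: "g1 \<in> H W X" and g2: "g2 \<in> H W X"
  and e: "padd ((F \<cdot> j1 X) \<cdot> g1) ((F \<cdot> j2 X) \<cdot> g2) = zm W Y"
  shows "g1 = g2"
proof -
  note B = bqX[OF X]
  note t = tpX[OF g1 g2]
  have "F \<cdot> tpX X g1 g2 = zm W Y" using bp_expand[OF B F t(1)] t e by simp
  then obtain h where h: "h \<in> H W X" "dg X \<cdot> h = tpX X g1 g2" using kerD(2)[OF K F dg(1)[OF X] t(1)] by blast
  have "g1 = h" using t(2) h assoc[OF h(1) dg(1)[OF X] bpD(5)[OF B]] dg(2)[OF X] idl[OF h(1)] by simp
  moreover have "g2 = h" using t(3) h assoc[OF h(1) dg(1)[OF X] bpD(7)[OF B]] dg(3)[OF X] idl[OF h(1)] by simp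
  ultimately show ?thesis by simp
qed

lemma R4_sum: assumes X: "X \<in> Ob" and F: "F \<in> H (PX X) Y" and K: "kernel C F (dg X)"
  shows "padd (F \<cdot> j1 X) (F \<cdot> j2 X) = zm X Y"
proof -
  note B = bqX[OF X]
  have "F \<cdot> dg X = zm X Y" using kerD(1)[OF K F dg(1)[OF X]] .
  moreover have "F \<cdot> dg X = padd ((F \<cdot> j1 X) \<cdot> I X) ((F \<cdot> j2 X) \<cdot> I X)"
    using bp_expand[OF B F dg(1)[OF X]] dg[OF X] by simp
  moreover have "F \<cdot> j1 X \<in> H X Y" "F \<cdot> j2 X \<in> H X Y" using bpD[OF B] F by blast+
  ultimately show ?thesis using idr by metis
qed

lemma unitary: assumes Z: "Z \<in> Ob" and j: "j \<in> H Q Z" and iso: "st j \<cdot> j = I Q"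
  and ker: "\<And>W g. g \<in> H W Z \<Longrightarrow> st j \<cdot> g = zm W Q \<Longrightarrow> g = zm W Z"
  shows "j \<cdot> st j = I Z"
proof -
  obtain F Y where F: "F \<in> H (PX Z) Y" "kernel C F (dg Z)" using R4[OF Z] by blast
  note B = bqX[OF Z]
  define A where "A = F \<cdot> j1 Z"
  define Bm where "Bm = F \<cdot> j2 Z"
  have A: "A \<in> H Z Y" and Bm: "Bm \<in> H Z Y" unfolding A_def Bm_def using bpD[OF B] F by blast+
  have AB: "padd A Bm = zm Z Y" unfolding A_def Bm_def by (rule R4_sum[OF Z F])
  have Q: "Q \<in> Ob" using Hom_obj j by auto
  have jj: "j \<cdot> st j \<in> H Z Z" using j by blast
  define Cc where "Cc = padd A (Bm \<cdot> (j \<cdot> st j))"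
  have Cc: "Cc \<in> H Z Y" unfolding Cc_def using A Bm jj by blast
  have "Cc \<cdot> j = padd (A \<cdot> j) ((Bm \<cdot> (j \<cdot> st j)) \<cdot> j)" unfolding Cc_def
    by (rule add_comp[OF A comp_Hom[OF jj Bm] j])
  also have "(Bm \<cdot> (j \<cdot> st j)) \<cdot> j = Bm \<cdot> j"
    using assoc[OF j jj Bm] assoc[OF j st_Hom[OF j] j] iso idr[OF j] by simp
  also have "padd (A \<cdot> j) (Bm \<cdot> j) = padd A Bm \<cdot> j" using add_comp[OF A Bm j] by simp
  also have "\<dots> = zm Q Y" using AB zm_left[OF j] Hom_obj(2)[OF A] by simp
  finally have "Cc \<cdot> j = zm Q Y" .
  then have "st j \<cdot> st Cc = zm Y Q" using st_comp[OF j Cc] st_zm[OF Q Hom_obj(2)[OF A]] by simp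
  then have "st Cc = zm Y Z" using ker[OF st_Hom[OF Cc]] by simp
  then have "Cc = zm Z Y" using st_zero_iff[OF Cc] by simp
  then have "padd ((F \<cdot> j1 Z) \<cdot> I Z) ((F \<cdot> j2 Z) \<cdot> (j \<cdot> st j)) = zm Z Y"
    unfolding Cc_def A_def Bm_def using idr A unfolding A_def by metis
  then have "I Z = j \<cdot> st j" by (rule R4_diag[OF Z F id_Hom[OF Z] jj])
  then show ?thesis by simp
qed



lemma neg_id: assumes X: "X \<in> Ob" shows "\<exists>n\<in>H X X. padd (I X) n = zm X X"
proof -
  obtain F Y where F: "F \<in> H (PX X) Y" "kernel C F (dg X)" using R4[OF X] by blast
  note B = bqX[OF X]
  note b = bpD[OF B]
  define P where "P = PX X"
  have P: "P \<in> Ob" unfolding P_def using b by simp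
  obtain K k where k: "k \<in> H K (PX X)" "kernel C F k" "st k \<cdot> k = I K" using R3[OF F(1)] by blast
  have K: "K \<in> Ob" using Hom_obj k by auto
  have Fk: "F \<cdot> k = zm K Y" using kerD(1)[OF k(2) F(1) k(1)] .
  define v where "v = st (j1 X) \<cdot> k"
  have v: "v \<in> H K X" unfolding v_def by (rule comp_Hom[OF k(1) b(5)])
  have v2: "st (j2 X) \<cdot> k = v"
  proof -
    have "padd ((F \<cdot> j1 X) \<cdot> (st (j1 X) \<cdot> k)) ((F \<cdot> j2 X) \<cdot> (st (j2 X) \<cdot> k)) = zm K Y"
      using bp_expand[OF B F(1) k(1)] Fk by simp
    then have "st (j1 X) \<cdot> k = st (j2 X) \<cdot> k"
      by (rule R4_diag[OF X F(1) F(2) comp_Hom[OF k(1) b(5)] comp_Hom[OF k(1) b(7)]])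
    then show ?thesis unfolding v_def by simp
  qed
  have sks1: "st k \<cdot> j1 X = st v" unfolding v_def using st_comp[OF k(1) b(5)] st_st[OF b(4)] by simp
  have sks2: "st k \<cdot> j2 X = st v" using v2 st_comp[OF k(1) b(7)] st_st[OF b(6)] by simp
  have isoK: "padd (st v \<cdot> v) (st v \<cdot> v) = I K"
    using bp_expand[OF B st_Hom[OF k(1)] k(1)] k(3) sks1 sks2 v2 unfolding v_def by simp
  obtain u where u: "u \<in> H X K" "k \<cdot> u = dg X"
    using kerD(2)[OF k(2) F(1) k(1) dg(1)[OF X] kerD(1)[OF F(2) F(1) dg(1)[OF X]]] by blast
  have vu: "v \<cdot> u = I X" unfolding v_def using assoc[OF u(1) k(1) b(5)] u(2) dg(2)[OF X] by simp
  define e where "e = v \<cdot> st v"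
  have e: "e \<in> H X X" unfolding e_def by (rule comp_Hom[OF st_Hom[OF v] v])
  have vsv: "st v \<cdot> v \<in> H K K" by (rule comp_Hom[OF v st_Hom[OF v]])
  have ee: "padd e e = I X"
  proof -
    have "I X = v \<cdot> (padd (st v \<cdot> v) (st v \<cdot> v) \<cdot> u)" using isoK idl[OF u(1)] vu by simp
    also have "\<dots> = v \<cdot> padd ((st v \<cdot> v) \<cdot> u) ((st v \<cdot> v) \<cdot> u)" using add_comp[OF vsv vsv u(1)] by simp
    also have "\<dots> = padd (v \<cdot> ((st v \<cdot> v) \<cdot> u)) (v \<cdot> ((st v \<cdot> v) \<cdot> u))"
      using comp_add[OF comp_Hom[OF u(1) vsv] comp_Hom[OF u(1) vsv] v] .
    also have "v \<cdot> ((st v \<cdot> v) \<cdot> u) = e"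
    proof -
      have "v \<cdot> ((st v \<cdot> v) \<cdot> u) = v \<cdot> (st v \<cdot> (v \<cdot> u))" using assoc[OF u(1) v st_Hom[OF v]] by simp
      also have "\<dots> = v \<cdot> st v" using vu idr[OF st_Hom[OF v]] by simp
      finally show ?thesis unfolding e_def .
    qed
    finally show ?thesis by simp
  qed
  obtain L l where l: "l \<in> H L (PX X)" "kernel C (st k) l" "st l \<cdot> l = I L" using R3[OF st_Hom[OF k(1)]] by blast
  have L: "L \<in> Ob" using Hom_obj l by auto
  have skl: "st k \<cdot> l = zm L K" using kerD(1)[OF l(2) st_Hom[OF k(1)] l(1)] .
  have slk: "st l \<cdot> k = zm K L" using st_comp[OF l(1) st_Hom[OF k(1)]] st_st[OF k(1)] skl st_zm[OF L K] by simp
  note BQ = bq[OF K L]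
  note q = bpD[OF BQ]
  define j where "j = cop (PP K L) (in1 K L) (in2 K L) k l"
  note jj = cop[OF BQ k(1) l(1), folded j_def]
  have sje1: "st (in1 K L) \<cdot> st j = st k" using st_comp[OF q(4) jj(1)] jj(2) by simp
  have sje2: "st (in2 K L) \<cdot> st j = st l" using st_comp[OF q(6) jj(1)] jj(3) by simp
  have sjk: "st j \<cdot> k = in1 K L"
  proof (rule tup_eq[OF BQ comp_Hom[OF k(1) st_Hom[OF jj(1)]] q(4)])
    show "st (in1 K L) \<cdot> (st j \<cdot> k) = st (in1 K L) \<cdot> in1 K L"
      using assoc[OF k(1) st_Hom[OF jj(1)] q(5)] sje1 k(3) q(8) by simp
    show "st (in2 K L) \<cdot> (st j \<cdot> k) = st (in2 K L) \<cdot> in1 K L"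
      using assoc[OF k(1) st_Hom[OF jj(1)] q(7)] sje2 slk q(10) by simp
  qed
  have sjl: "st j \<cdot> l = in2 K L"
  proof (rule tup_eq[OF BQ comp_Hom[OF l(1) st_Hom[OF jj(1)]] q(6)])
    show "st (in1 K L) \<cdot> (st j \<cdot> l) = st (in1 K L) \<cdot> in2 K L"
      using assoc[OF l(1) st_Hom[OF jj(1)] q(5)] sje1 skl q(11) by simp
    show "st (in2 K L) \<cdot> (st j \<cdot> l) = st (in2 K L) \<cdot> in2 K L"
      using assoc[OF l(1) st_Hom[OF jj(1)] q(7)] sje2 l(3) q(9) by simp
  qed
  have jiso: "st j \<cdot> j = I (PP K L)"
  proof (rule cop_eq[OF BQ comp_Hom[OF jj(1) st_Hom[OF jj(1)]] id_Hom[OF q(3)]])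
    show "(st j \<cdot> j) \<cdot> in1 K L = I (PP K L) \<cdot> in1 K L"
      using assoc[OF q(4) jj(1) st_Hom[OF jj(1)]] jj(2) sjk idl[OF q(4)] by simp
    show "(st j \<cdot> j) \<cdot> in2 K L = I (PP K L) \<cdot> in2 K L"
      using assoc[OF q(6) jj(1) st_Hom[OF jj(1)]] jj(3) sjl idl[OF q(6)] by simp
  qed
  have jker: "g = zm W (PX X)" if g: "g \<in> H W (PX X)" and sg: "st j \<cdot> g = zm W (PP K L)" for W g
  proof -
    have W: "W \<in> Ob" using Hom_obj g by auto
    have "st k \<cdot> g = st (in1 K L) \<cdot> (st j \<cdot> g)" using assoc[OF g st_Hom[OF jj(1)] q(5)] sje1 by simp
    also have "\<dots> = zm W K" using sg zm_right[OF q(5) W] by simp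
    finally have "st k \<cdot> g = zm W K" .
    then obtain h where h: "h \<in> H W L" "l \<cdot> h = g" using kerD(2)[OF l(2) st_Hom[OF k(1)] l(1) g] by blast
    have "st l \<cdot> g = st (in2 K L) \<cdot> (st j \<cdot> g)" using assoc[OF g st_Hom[OF jj(1)] q(7)] sje2 by simp
    also have "\<dots> = zm W L" using sg zm_right[OF q(7) W] by simp
    finally have "st l \<cdot> g = zm W L" .
    moreover have "st l \<cdot> g = h" using h assoc[OF h(1) l(1) st_Hom[OF l(1)]] l(3) idl[OF h(1)] by simp
    ultimately have "h = zm W L" by simp
    then show ?thesis using h zm_right[OF l(1) W] by simp
  qed
  have uni: "j \<cdot> st j = I (PX X)" by (rule unitary[OF b(3) jj(1) jiso jker])
  have sum: "padd (k \<cdot> st k) (l \<cdot> st l) = I (PX X)"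
    using bp_expand[OF BQ jj(1) st_Hom[OF jj(1)]] jj(2,3) sje1 sje2 uni by simp
  define n0 where "n0 = (st (j1 X) \<cdot> l) \<cdot> st (st (j2 X) \<cdot> l)"
  have n0: "n0 \<in> H X X" unfolding n0_def by (rule comp_Hom[OF st_Hom[OF comp_Hom[OF l(1) b(7)]] comp_Hom[OF l(1) b(5)]])
  have en0: "padd e n0 = zm X X"
  proof -
    have kk: "k \<cdot> st k \<in> H (PX X) (PX X)" by (rule comp_Hom[OF st_Hom[OF k(1)] k(1)])
    have ll: "l \<cdot> st l \<in> H (PX X) (PX X)" by (rule comp_Hom[OF st_Hom[OF l(1)] l(1)])
    have "zm X X = st (j1 X) \<cdot> (padd (k \<cdot> st k) (l \<cdot> st l) \<cdot> j2 X)" using sum idl[OF b(6)] b(11) by simp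
    also have "\<dots> = st (j1 X) \<cdot> padd ((k \<cdot> st k) \<cdot> j2 X) ((l \<cdot> st l) \<cdot> j2 X)"
      using add_comp[OF kk ll b(6)] by simp
    also have "\<dots> = padd (st (j1 X) \<cdot> ((k \<cdot> st k) \<cdot> j2 X)) (st (j1 X) \<cdot> ((l \<cdot> st l) \<cdot> j2 X))"
      by (rule comp_add[OF comp_Hom[OF b(6) kk] comp_Hom[OF b(6) ll] b(5)])
    also have "st (j1 X) \<cdot> ((k \<cdot> st k) \<cdot> j2 X) = e"
    proof -
      have "st (j1 X) \<cdot> ((k \<cdot> st k) \<cdot> j2 X) = (st (j1 X) \<cdot> k) \<cdot> (st k \<cdot> j2 X)"
        using assoc[OF b(6) st_Hom[OF k(1)] k(1)] assoc[OF comp_Hom[OF b(6) st_Hom[OF k(1)]] k(1) b(5)] by simp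
      then show ?thesis using sks2 unfolding e_def v_def by simp
    qed
    also have "st (j1 X) \<cdot> ((l \<cdot> st l) \<cdot> j2 X) = n0"
    proof -
      have "st (j1 X) \<cdot> ((l \<cdot> st l) \<cdot> j2 X) = (st (j1 X) \<cdot> l) \<cdot> (st l \<cdot> j2 X)"
        using assoc[OF b(6) st_Hom[OF l(1)] l(1)] assoc[OF comp_Hom[OF b(6) st_Hom[OF l(1)]] l(1) b(5)] by simp
      also have "st l \<cdot> j2 X = st (st (j2 X) \<cdot> l)" using st_comp[OF l(1) b(7)] st_st[OF b(6)] by simp
      finally show ?thesis unfolding n0_def .
    qed
    finally show ?thesis by simp
  qed
  have nn: "padd n0 n0 \<in> H X X" by (rule add_Hom[OF n0 n0])
  have "padd (I X) (padd n0 n0) = padd (padd (padd e e) n0) n0"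
    using ee add_assoc[OF add_Hom[OF e e] n0 n0] by simp
  also have "\<dots> = padd (padd e (padd e n0)) n0" using add_assoc[OF e e n0] by simp
  also have "\<dots> = padd e n0" using en0 add_zero_r[OF e] by simp
  also have "\<dots> = zm X X" by (rule en0)
  finally show ?thesis using nn by (rule bexI)
qed

lemma neg_ex: assumes f: "f \<in> H X Y" shows "\<exists>g\<in>H X Y. padd g f = zm X Y"
proof -
  have X: "X \<in> Ob" using Hom_obj f by auto
  obtain n where n: "n \<in> H X X" "padd (I X) n = zm X X" using neg_id[OF X] by blast
  have "padd (f \<cdot> n) f = f \<cdot> padd (I X) n"
    using comp_add[OF id_Hom[OF X] n(1) f] idr[OF f] add_comm[OF comp_Hom[OF n(1) f] f] by simp
  also have "\<dots> = zm X Y" using n(2) zm_right[OF f X] by simp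
  finally show ?thesis using comp_Hom[OF n(1) f] by (rule bexI)
qed



lemma padd_group: assumes X: "X \<in> Ob" and Y: "Y \<in> Ob"
  shows "comm_group \<lparr>carrier = H X Y, mult = padd, one = zm X Y\<rparr>"
proof (rule comm_groupI, goal_cases)
  case (1 x y) then show ?case by (simp add: add_Hom)
next
  case 2 then show ?case using zm_Hom[OF X Y] by simp
next
  case (3 x y z) then show ?case using add_assoc by simp
next
  case (4 x y) then show ?case using add_comm by simp
next
  case (5 x) then show ?case using add_zero_l by simp
next
  case (6 x) then show ?case using neg_ex by simp
qed

lemma padd_enrich: "ab_enrichment C padd"
  unfolding ab_enrichment_def
proof (intro conjI ballI)
  fix X Y assume "X \<in> Ob" "Y \<in> Ob"
  then show "\<exists>z. comm_group \<lparr>carrier = H X Y, mult = padd, one = z\<rparr>" using padd_group by blast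
next
  fix W X Y Z f g h k assume "f \<in> H X Y" "g \<in> H X Y" "h \<in> H Y Z" "k \<in> H W X"
  then show "h \<cdot> padd f g = padd (h \<cdot> f) (h \<cdot> g)" "padd f g \<cdot> k = padd (f \<cdot> k) (g \<cdot> k)"
    using comp_add add_comp by auto
qed

lemma mzero_eq: assumes X: "X \<in> Ob" and Y: "Y \<in> Ob" shows "mzero (H X Y) padd = zm X Y"
  unfolding mzero_def
proof (rule the_equality)
  show "zm X Y \<in> H X Y \<and> (\<forall>x\<in>H X Y. padd (zm X Y) x = x)" using zm_Hom[OF X Y] add_zero_l by blast
next
  fix z assume z: "z \<in> H X Y \<and> (\<forall>x\<in>H X Y. padd z x = x)"
  then have "padd z (zm X Y) = zm X Y" using zm_Hom[OF X Y] by blast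
  then show "z = zm X Y" using add_zero_r z by simp
qed

lemma enr_unique: assumes E: "ab_enrichment C pl" and f: "f \<in> H X Y" and g: "g \<in> H X Y"
  shows "pl f g = padd f g"
proof -
  have grp: "\<And>X Y. X \<in> Ob \<Longrightarrow> Y \<in> Ob \<Longrightarrow> \<exists>z. comm_group \<lparr>carrier = H X Y, mult = pl, one = z\<rparr>"
    using E unfolding ab_enrichment_def by blast
  have bil: "\<And>W X Y Z f g h k. W \<in> Ob \<Longrightarrow> X \<in> Ob \<Longrightarrow> Y \<in> Ob \<Longrightarrow> Z \<in> Ob \<Longrightarrow>
     f \<in> H X Y \<Longrightarrow> g \<in> H X Y \<Longrightarrow> h \<in> H Y Z \<Longrightarrow> k \<in> H W X \<Longrightarrow>
     h \<cdot> pl f g = pl (h \<cdot> f) (h \<cdot> g) \<and> pl f g \<cdot> k = pl (f \<cdot> k) (g \<cdot> k)"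
    using E unfolding ab_enrichment_def by blast
  have lcomp: "h \<cdot> pl a b = pl (h \<cdot> a) (h \<cdot> b)" if "a \<in> H U V" "b \<in> H U V" "h \<in> H V T" for a b h U V T
    using bil[of U U V T a b h "I U"] that Hom_obj by blast
  have rcomp: "pl a b \<cdot> k = pl (a \<cdot> k) (b \<cdot> k)" if "a \<in> H U V" "b \<in> H U V" "k \<in> H T U" for a b k U V T
    using bil[of T U V V a b "I V" k] that Hom_obj by blast
  define ze where "ze U V = (SOME z. comm_group \<lparr>carrier = H U V, mult = pl, one = z\<rparr>)" for U V
  have G: "comm_group \<lparr>carrier = H U V, mult = pl, one = ze U V\<rparr>" if "U \<in> Ob" "V \<in> Ob" for U V
    unfolding ze_def using grp[OF that] by (rule someI_ex)
  have Gg: "group \<lparr>carrier = H U V, mult = pl, one = ze U V\<rparr>" if "U \<in> Ob" "V \<in> Ob" for U V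
    using G[OF that] comm_group.axioms(2) by blast
  have ze_in: "ze U V \<in> H U V" if "U \<in> Ob" "V \<in> Ob" for U V
    using monoid.one_closed[OF group.is_monoid[OF Gg[OF that]]] by simp
  have ze_l: "pl (ze U V) x = x" if "U \<in> Ob" "V \<in> Ob" "x \<in> H U V" for U V x
    using monoid.l_one[OF group.is_monoid[OF Gg[OF that(1,2)]]] that(3) by simp
  have ze_r: "pl x (ze U V) = x" if "U \<in> Ob" "V \<in> Ob" "x \<in> H U V" for U V x
    using monoid.r_one[OF group.is_monoid[OF Gg[OF that(1,2)]]] that(3) by simp
  have idem: "x = ze U V" if "U \<in> Ob" "V \<in> Ob" "x \<in> H U V" "pl x x = x" for U V x
    using group.l_cancel_one[OF Gg[OF that(1,2)], of x x] that(3,4) by simp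
  have hze: "h \<cdot> ze U V = ze U T" if "U \<in> Ob" "V \<in> Ob" "h \<in> H V T" for U V T h
  proof -
    have T: "T \<in> Ob" using Hom_obj that(3) by auto
    have "h \<cdot> ze U V = h \<cdot> pl (ze U V) (ze U V)" using ze_l[OF that(1,2) ze_in[OF that(1,2)]] by simp
    also have "\<dots> = pl (h \<cdot> ze U V) (h \<cdot> ze U V)" using lcomp[OF ze_in[OF that(1,2)] ze_in[OF that(1,2)] that(3)] .
    finally show ?thesis using idem[OF that(1) T comp_Hom[OF ze_in[OF that(1,2)] that(3)]] by simp
  qed
  have zm_ze: "zm U V = ze U V" if U: "U \<in> Ob" and V: "V \<in> Ob" for U V
  proof -
    have a: "(SOME a. a \<in> H U Z0) \<in> H U Z0" using zo_in(1)[OF Z0 U] by (metis someI_ex)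
    have b: "(SOME b. b \<in> H Z0 V) \<in> H Z0 V" using zo_in(2)[OF Z0 V] by (metis someI_ex)
    have "(SOME a. a \<in> H U Z0) = ze U Z0" using zo_in(3)[OF Z0 U a ze_in[OF U Z0_obj]] .
    then show ?thesis unfolding zm_def using hze[OF U Z0_obj b] by simp
  qed
  have X: "X \<in> Ob" and Y: "Y \<in> Ob" using Hom_obj f by auto
  note B = bqX[OF X]
  note b = bpD[OF B]
  have h1: "j1 X \<cdot> st (j1 X) \<in> H (PX X) (PX X)" "j2 X \<cdot> st (j2 X) \<in> H (PX X) (PX X)" using b by blast+
  have idP: "pl (j1 X \<cdot> st (j1 X)) (j2 X \<cdot> st (j2 X)) = I (PX X)"
  proof (rule tup_eq[OF B _ id_Hom[OF b(3)]])
    show "pl (j1 X \<cdot> st (j1 X)) (j2 X \<cdot> st (j2 X)) \<in> H (PX X) (PX X)"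
      using monoid.m_closed[OF group.is_monoid[OF Gg[OF b(3) b(3)]]] h1 by simp
    have "st (j1 X) \<cdot> pl (j1 X \<cdot> st (j1 X)) (j2 X \<cdot> st (j2 X))
        = pl (st (j1 X) \<cdot> (j1 X \<cdot> st (j1 X))) (st (j1 X) \<cdot> (j2 X \<cdot> st (j2 X)))" using lcomp[OF h1 b(5)] .
    also have "\<dots> = pl (st (j1 X)) (zm (PX X) X)" using assoc[OF b(5) b(4) b(5)] assoc[OF b(7) b(6) b(5)] b(8) b(11)
      idl[OF b(5)] zm_left[OF b(7) b(1)] by simp
    also have "\<dots> = st (j1 X)" using ze_r[OF b(3) X b(5)] zm_ze[OF b(3) X] by simp
    finally show "st (j1 X) \<cdot> pl (j1 X \<cdot> st (j1 X)) (j2 X \<cdot> st (j2 X)) = st (j1 X) \<cdot> I (PX X)" using idr[OF b(5)] by simp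
    have "st (j2 X) \<cdot> pl (j1 X \<cdot> st (j1 X)) (j2 X \<cdot> st (j2 X))
        = pl (st (j2 X) \<cdot> (j1 X \<cdot> st (j1 X))) (st (j2 X) \<cdot> (j2 X \<cdot> st (j2 X)))" using lcomp[OF h1 b(7)] .
    also have "\<dots> = pl (zm (PX X) X) (st (j2 X))" using assoc[OF b(5) b(4) b(7)] assoc[OF b(7) b(6) b(7)] b(9) b(10)
      idl[OF b(7)] zm_left[OF b(5) b(2)] by simp
    also have "\<dots> = st (j2 X)" using ze_l[OF b(3) X b(7)] zm_ze[OF b(3) X] by simp
    finally show "st (j2 X) \<cdot> pl (j1 X \<cdot> st (j1 X)) (j2 X \<cdot> st (j2 X)) = st (j2 X) \<cdot> I (PX X)" using idr[OF b(7)] by simp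
  qed
  note c = cpX[OF f g]
  note d = dg[OF X]
  have "padd f g = cpX X f g \<cdot> (I (PX X) \<cdot> dg X)" unfolding padd_def HomD[OF f] using idl[OF d(1)] by simp
  also have "\<dots> = cpX X f g \<cdot> pl ((j1 X \<cdot> st (j1 X)) \<cdot> dg X) ((j2 X \<cdot> st (j2 X)) \<cdot> dg X)"
    using idP rcomp[OF h1 d(1)] by simp
  also have "(j1 X \<cdot> st (j1 X)) \<cdot> dg X = j1 X" using assoc[OF d(1) b(5) b(4), symmetric] d(2) idr[OF b(4)] by simp
  also have "(j2 X \<cdot> st (j2 X)) \<cdot> dg X = j2 X" using assoc[OF d(1) b(7) b(6), symmetric] d(3) idr[OF b(6)] by simp
  also have "cpX X f g \<cdot> pl (j1 X) (j2 X) = pl (cpX X f g \<cdot> j1 X) (cpX X f g \<cdot> j2 X)"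
    using lcomp[OF b(4) _ c(1)] b(6) by blast
  also have "\<dots> = pl f g" using c by simp
  finally show ?thesis by simp
qed



lemma aniso: assumes x: "x \<in> H A X" and e: "st x \<cdot> x = zm A A" shows "x = zm A X"
proof -
  have A: "A \<in> Ob" and X: "X \<in> Ob" using Hom_obj x by auto
  obtain M m where m: "m \<in> H M X" "kernel C (st x) m" "st m \<cdot> m = I M" using R3[OF st_Hom[OF x]] by blast
  have M: "M \<in> Ob" using Hom_obj m by auto
  obtain h where h: "h \<in> H A M" "m \<cdot> h = x" using kerD(2)[OF m(2) st_Hom[OF x] m(1) x e] by blast
  have sxm: "st x \<cdot> m = zm M A" using kerD(1)[OF m(2) st_Hom[OF x] m(1)] .
  have "st h = st h \<cdot> (st m \<cdot> m)" using m(3) idr[OF st_Hom[OF h(1)]] by simp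
  also have "\<dots> = (st h \<cdot> st m) \<cdot> m" using assoc[OF m(1) st_Hom[OF m(1)] st_Hom[OF h(1)]] .
  also have "st h \<cdot> st m = st x" using st_comp[OF h(1) m(1)] h(2) by simp
  finally have "st h = zm M A" using sxm by simp
  then have "h = zm A M" using st_zero_iff[OF h(1)] by simp
  then show ?thesis using h(2) zm_right[OF m(1) A] by simp
qed

definition RR where "RR A = endo_ring C padd A"

lemma RR_simps: "carrier (RR A) = H A A" "mult (RR A) = cmp C" "one (RR A) = I A"
  "zero (RR A) = mzero (H A A) padd" "add (RR A) = padd"
  unfolding RR_def endo_ring_def by simp_all

lemma RR_ring: assumes A: "A \<in> Ob" shows "ring (RR A)"
proof (rule ringI)
  show "abelian_group (RR A)"
  proof (rule abelian_groupI, goal_cases)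
    case (1 x y) then show ?case by (simp add: RR_simps add_Hom)
  next
    case 2 then show ?case using zm_Hom[OF A A] by (simp add: RR_simps mzero_eq[OF A A])
  next
    case (3 x y z) then show ?case using add_assoc by (simp add: RR_simps)
  next
    case (4 x y) then show ?case using add_comm by (simp add: RR_simps)
  next
    case (5 x) then show ?case using add_zero_l by (simp add: RR_simps mzero_eq[OF A A])
  next
    case (6 x) then show ?case using neg_ex by (simp add: RR_simps mzero_eq[OF A A])
  qed
  show "monoid (RR A)"
  proof (rule monoidI, goal_cases)
    case (1 x y) then show ?case by (simp add: RR_simps comp_Hom)
  next
    case 2 then show ?case using A by (simp add: RR_simps id_Hom)
  next
    case (3 x y z) then show ?case using assoc by (simp add: RR_simps)
  next
    case (4 x) then show ?case using idl by (simp add: RR_simps)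
  next
    case (5 x) then show ?case using idr by (simp add: RR_simps)
  qed
next
  fix x y z assume "x \<in> carrier (RR A)" "y \<in> carrier (RR A)" "z \<in> carrier (RR A)"
  then show "(x \<oplus>\<^bsub>RR A\<^esub> y) \<otimes>\<^bsub>RR A\<^esub> z = x \<otimes>\<^bsub>RR A\<^esub> z \<oplus>\<^bsub>RR A\<^esub> y \<otimes>\<^bsub>RR A\<^esub> z"
       "z \<otimes>\<^bsub>RR A\<^esub> (x \<oplus>\<^bsub>RR A\<^esub> y) = z \<otimes>\<^bsub>RR A\<^esub> x \<oplus>\<^bsub>RR A\<^esub> z \<otimes>\<^bsub>RR A\<^esub> y"
    using add_comp comp_add by (simp_all add: RR_simps)
qed

lemma pos_cone_sum: assumes x: "x \<in> H A X" and y: "y \<in> H A Y"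
  shows "\<exists>P z. P \<in> Ob \<and> z \<in> H A P \<and> st z \<cdot> z = padd (st x \<cdot> x) (st y \<cdot> y) \<and> (z = zm A P \<longrightarrow> x = zm A X)"
proof -
  have A: "A \<in> Ob" and X: "X \<in> Ob" and Y: "Y \<in> Ob" using Hom_obj x y by auto
  note B = bq[OF X Y]
  note b = bpD[OF B]
  define z where "z = tup (PP X Y) (st (in1 X Y)) (st (in2 X Y)) x y"
  note t = tup[OF B x y, folded z_def]
  have s1: "st z \<cdot> in1 X Y = st x" using st_comp[OF t(1) b(5)] st_st[OF b(4)] t(2) by simp
  have s2: "st z \<cdot> in2 X Y = st y" using st_comp[OF t(1) b(7)] st_st[OF b(6)] t(3) by simp
  have "st z \<cdot> z = padd (st x \<cdot> x) (st y \<cdot> y)" using bp_expand[OF B st_Hom[OF t(1)] t(1)] s1 s2 t by simp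
  moreover have "z = zm A (PP X Y) \<longrightarrow> x = zm A X" using t(2) zm_right[OF b(5) A] by auto
  ultimately show ?thesis using b(3) t(1) by blast
qed

lemma pos_cone_ok: assumes A: "A \<in> Ob" shows "positive_cone (RR A) st (pos_cone_of C A)"
  unfolding positive_cone_def
proof (intro conjI)
  interpret R: ring "RR A" by (rule RR_ring[OF A])
  show "pos_cone_of C A \<subseteq> {a \<in> carrier (RR A). st a = a}"
  proof
    fix a assume "a \<in> pos_cone_of C A"
    then obtain x X where x: "X \<in> Ob" "x \<in> H A X" "a = st x \<cdot> x" unfolding pos_cone_of_def by blast
    then show "a \<in> {a \<in> carrier (RR A). st a = a}"
      using st_comp[OF x(2) st_Hom[OF x(2)]] st_st[OF x(2)] comp_Hom[OF x(2) st_Hom[OF x(2)]] by (simp add: RR_simps)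
  qed
  show "\<one>\<^bsub>RR A\<^esub> \<in> pos_cone_of C A" unfolding pos_cone_of_def RR_simps
    using A idl[OF id_Hom[OF A]] st_id[OF A] id_Hom[OF A] by force
  show "\<forall>a\<in>pos_cone_of C A. \<forall>b\<in>pos_cone_of C A. a \<oplus>\<^bsub>RR A\<^esub> b \<in> pos_cone_of C A"
  proof (intro ballI)
    fix a b assume "a \<in> pos_cone_of C A" "b \<in> pos_cone_of C A"
    then obtain x X y Y where x: "X \<in> Ob" "x \<in> H A X" "a = st x \<cdot> x" and y: "Y \<in> Ob" "y \<in> H A Y" "b = st y \<cdot> y"
      unfolding pos_cone_of_def by blast
    obtain P z where "P \<in> Ob" "z \<in> H A P" "st z \<cdot> z = padd (st x \<cdot> x) (st y \<cdot> y)"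
      using pos_cone_sum[OF x(2) y(2)] by blast
    then have "padd a b = st z \<cdot> z \<and> P \<in> Ob \<and> z \<in> H A P" using x y by simp
    then show "a \<oplus>\<^bsub>RR A\<^esub> b \<in> pos_cone_of C A" unfolding pos_cone_of_def RR_simps by blast
  qed
  show "\<forall>r\<in>carrier (RR A). \<forall>a\<in>pos_cone_of C A. st r \<otimes>\<^bsub>RR A\<^esub> a \<otimes>\<^bsub>RR A\<^esub> r \<in> pos_cone_of C A"
  proof (intro ballI)
    fix r a assume r: "r \<in> carrier (RR A)" and "a \<in> pos_cone_of C A"
    then obtain x X where x: "X \<in> Ob" "x \<in> H A X" "a = st x \<cdot> x" unfolding pos_cone_of_def by blast
    have r': "r \<in> H A A" using r by (simp add: RR_simps)
    have "(st r \<cdot> (st x \<cdot> x)) \<cdot> r = st (x \<cdot> r) \<cdot> (x \<cdot> r)"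
      using assoc[OF x(2) st_Hom[OF x(2)] st_Hom[OF r']] assoc[OF r' x(2) comp_Hom[OF st_Hom[OF x(2)] st_Hom[OF r']]]
        st_comp[OF r' x(2)] by simp
    then show "st r \<otimes>\<^bsub>RR A\<^esub> a \<otimes>\<^bsub>RR A\<^esub> r \<in> pos_cone_of C A"
      unfolding pos_cone_of_def RR_simps using x comp_Hom[OF r' x(2)] by auto
  qed
  show "pos_cone_of C A \<inter> (\<lambda>a. \<ominus>\<^bsub>RR A\<^esub> a) ` pos_cone_of C A = {\<zero>\<^bsub>RR A\<^esub>}"
  proof
    have z0: "\<zero>\<^bsub>RR A\<^esub> = zm A A" by (simp add: RR_simps mzero_eq[OF A A])
    have zin: "zm A A \<in> pos_cone_of C A" unfolding pos_cone_of_def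
      using st_zm[OF A A] zm_left[OF zm_Hom[OF A A] A] A zm_Hom[OF A A] by force
    show "{\<zero>\<^bsub>RR A\<^esub>} \<subseteq> pos_cone_of C A \<inter> (\<lambda>a. \<ominus>\<^bsub>RR A\<^esub> a) ` pos_cone_of C A"
      using zin z0 R.minus_zero by (metis Int_iff empty_subsetI image_eqI insert_subset)
    show "pos_cone_of C A \<inter> (\<lambda>a. \<ominus>\<^bsub>RR A\<^esub> a) ` pos_cone_of C A \<subseteq> {\<zero>\<^bsub>RR A\<^esub>}"
    proof
      fix a assume "a \<in> pos_cone_of C A \<inter> (\<lambda>a. \<ominus>\<^bsub>RR A\<^esub> a) ` pos_cone_of C A"
      then obtain b where a: "a \<in> pos_cone_of C A" and b: "b \<in> pos_cone_of C A" and ab: "a = \<ominus>\<^bsub>RR A\<^esub> b" by blast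
      obtain x X where x: "X \<in> Ob" "x \<in> H A X" "a = st x \<cdot> x" using a unfolding pos_cone_of_def by blast
      obtain y Y where y: "Y \<in> Ob" "y \<in> H A Y" "b = st y \<cdot> y" using b unfolding pos_cone_of_def by blast
      have bc: "b \<in> carrier (RR A)" using y comp_Hom[OF y(2) st_Hom[OF y(2)]] by (simp add: RR_simps)
      have "a \<oplus>\<^bsub>RR A\<^esub> b = \<zero>\<^bsub>RR A\<^esub>" using ab R.l_neg[OF bc] by simp
      then have sum0: "padd (st x \<cdot> x) (st y \<cdot> y) = zm A A" using x y z0 by (simp add: RR_simps)
      obtain P z where z: "P \<in> Ob" "z \<in> H A P" "st z \<cdot> z = padd (st x \<cdot> x) (st y \<cdot> y)" "z = zm A P \<longrightarrow> x = zm A X"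
        using pos_cone_sum[OF x(2) y(2)] by blast
      have "z = zm A P" using aniso[OF z(2)] z(3) sum0 by simp
      then have "x = zm A X" using z(4) by simp
      then have "a = zm A A" using x st_zm[OF A x(1)] zm_left[OF zm_Hom[OF A x(1)] A] by simp
      then show "a \<in> {\<zero>\<^bsub>RR A\<^esub>}" using z0 by simp
    qed
  qed
qed

lemma osr: assumes A: "A \<in> Ob" shows "ordered_star_ring (RR A) st (pos_cone_of C A)"
  unfolding ordered_star_ring_def
proof (intro conjI)
  show "star_ring (RR A) st" unfolding star_ring_def RR_simps
  proof (intro conjI ballI)
    show "ring (RR A)" by (rule RR_ring[OF A])
    show "st (I A) = I A" by (rule st_id[OF A])
    fix r assume r: "r \<in> H A A"
    show "st r \<in> H A A" using st_Hom[OF r] .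
    show "st (st r) = r" using st_st[OF r] .
    fix s assume s: "s \<in> H A A"
    show "st (s \<cdot> r) = st r \<cdot> st s" using st_comp[OF r s] .
    show "st (padd r s) = padd (st r) (st s)" using st_add[OF r s] .
  qed
  show "anisotropic (RR A) st" unfolding anisotropic_def RR_simps mzero_eq[OF A A]
    using aniso by blast
  show "positive_cone (RR A) st (pos_cone_of C A)" by (rule pos_cone_ok[OF A])
qed

lemma ipm: assumes A: "A \<in> Ob" and X: "X \<in> Ob"
  shows "inner_product_module (RR A) st (pos_cone_of C A) (H A X) padd (\<lambda>x r. x \<cdot> r) (\<lambda>x y. st x \<cdot> y)"
  unfolding inner_product_module_def
proof (intro conjI)
  show "ordered_star_ring (RR A) st (pos_cone_of C A)" by (rule osr[OF A])
  show "right_module (RR A) (H A X) padd (\<lambda>x r. x \<cdot> r)" unfolding right_module_def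
  proof (intro conjI)
    show "ring (RR A)" by (rule RR_ring[OF A])
    show "\<exists>z. comm_group \<lparr>carrier = H A X, mult = padd, one = z\<rparr>" using padd_group[OF A X] by blast
    show "\<forall>x\<in>H A X. \<forall>r\<in>carrier (RR A). x \<cdot> r \<in> H A X" unfolding RR_simps by blast
    show "\<forall>x\<in>H A X. \<forall>y\<in>H A X. \<forall>r\<in>carrier (RR A). padd x y \<cdot> r = padd (x \<cdot> r) (y \<cdot> r)"
      unfolding RR_simps using add_comp by blast
    show "\<forall>x\<in>H A X. \<forall>r\<in>carrier (RR A). \<forall>s\<in>carrier (RR A). x \<cdot> (r \<oplus>\<^bsub>RR A\<^esub> s) = padd (x \<cdot> r) (x \<cdot> s)"
      unfolding RR_simps using comp_add by blast
    show "\<forall>x\<in>H A X. \<forall>r\<in>carrier (RR A). \<forall>s\<in>carrier (RR A). x \<cdot> (r \<otimes>\<^bsub>RR A\<^esub> s) = (x \<cdot> r) \<cdot> s"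
      unfolding RR_simps using assoc by blast
    show "\<forall>x\<in>H A X. x \<cdot> \<one>\<^bsub>RR A\<^esub> = x" unfolding RR_simps using idr by blast
  qed
  show "\<forall>x\<in>H A X. \<forall>y\<in>H A X. st x \<cdot> y \<in> carrier (RR A)" unfolding RR_simps by blast
  show "\<forall>x\<in>H A X. \<forall>y\<in>H A X. \<forall>z\<in>H A X. \<forall>r\<in>carrier (RR A).
        st x \<cdot> padd (y \<cdot> r) z = (st x \<cdot> y) \<otimes>\<^bsub>RR A\<^esub> r \<oplus>\<^bsub>RR A\<^esub> (st x \<cdot> z)"
  proof (intro ballI)
    fix x y z r assume x: "x \<in> H A X" and y: "y \<in> H A X" and z: "z \<in> H A X" and r: "r \<in> carrier (RR A)"
    have r': "r \<in> H A A" using r by (simp add: RR_simps)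
    show "st x \<cdot> padd (y \<cdot> r) z = (st x \<cdot> y) \<otimes>\<^bsub>RR A\<^esub> r \<oplus>\<^bsub>RR A\<^esub> (st x \<cdot> z)"
      using comp_add[OF comp_Hom[OF r' y] z st_Hom[OF x]] assoc[OF r' y st_Hom[OF x]] by (simp add: RR_simps)
  qed
  show "\<forall>x\<in>H A X. \<forall>y\<in>H A X. st (st x \<cdot> y) = st y \<cdot> x"
  proof (intro ballI)
    fix x y assume x: "x \<in> H A X" and y: "y \<in> H A X"
    show "st (st x \<cdot> y) = st y \<cdot> x" using st_comp[OF y st_Hom[OF x]] st_st[OF x] by simp
  qed
  show "\<forall>x\<in>H A X. st x \<cdot> x \<in> pos_cone_of C A" unfolding pos_cone_of_def using X by blast
  show "\<forall>x\<in>H A X. st x \<cdot> x = \<zero>\<^bsub>RR A\<^esub> \<longrightarrow> x = mzero (H A X) padd"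
    unfolding RR_simps mzero_eq[OF A A] mzero_eq[OF A X] using aniso by blast
qed


end

theorem proposition5p12:
  fixes C :: "('o,'m) star_cat" and A :: 'o
  assumes "pre_hilbert C" and "A \<in> obj C"
  shows "\<exists>pl. ab_enrichment C pl \<and>
    (\<forall>pl'. ab_enrichment C pl' \<longrightarrow>
       (\<forall>X\<in>obj C. \<forall>Y\<in>obj C. \<forall>f\<in>Hom C X Y. \<forall>g\<in>Hom C X Y. pl' f g = pl f g)) \<and>
    ordered_star_ring (endo_ring C pl A) (str C) (pos_cone_of C A) \<and>
    (\<forall>X\<in>obj C. inner_product_module (endo_ring C pl A) (str C) (pos_cone_of C A)
        (Hom C A X) pl (\<lambda>x r. cmp C x r) (\<lambda>x y. cmp C (str C x) y)) \<and>
    (\<forall>X\<in>obj C. \<forall>Y\<in>obj C. \<forall>f\<in>Hom C X Y.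
        adjoint_of (Hom C A X) (Hom C A Y) (\<lambda>x y. cmp C (str C x) y) (\<lambda>x y. cmp C (str C x) y)
          (\<lambda>x. cmp C f x) (\<lambda>y. cmp C (str C f) y)) \<and>
    (\<forall>X\<in>obj C. \<forall>x\<in>Hom C A X. cmp C (idt C X) x = x) \<and>
    (\<forall>X\<in>obj C. \<forall>Y\<in>obj C. \<forall>Z\<in>obj C. \<forall>f\<in>Hom C X Y. \<forall>g\<in>Hom C Y Z. \<forall>x\<in>Hom C A X.
        cmp C (cmp C g f) x = cmp C g (cmp C f x))"
proof -
  interpret P: ph C by (unfold_locales) (rule assms(1))
  have A: "A \<in> obj C" by (rule assms(2))
  show ?thesis
  proof (rule exI[of _ P.padd], intro conjI)
    show "ab_enrichment C P.padd" by (rule P.padd_enrich)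
    show "\<forall>pl'. ab_enrichment C pl' \<longrightarrow>
       (\<forall>X\<in>obj C. \<forall>Y\<in>obj C. \<forall>f\<in>Hom C X Y. \<forall>g\<in>Hom C X Y. pl' f g = P.padd f g)"
      using P.enr_unique by blast
    show "ordered_star_ring (endo_ring C P.padd A) (str C) (pos_cone_of C A)"
      using P.osr[OF A] unfolding P.RR_def .
    show "\<forall>X\<in>obj C. inner_product_module (endo_ring C P.padd A) (str C) (pos_cone_of C A)
        (Hom C A X) P.padd (\<lambda>x r. cmp C x r) (\<lambda>x y. cmp C (str C x) y)"
      using P.ipm[OF A] unfolding P.RR_def by blast
    show "\<forall>X\<in>obj C. \<forall>Y\<in>obj C. \<forall>f\<in>Hom C X Y.
        adjoint_of (Hom C A X) (Hom C A Y) (\<lambda>x y. cmp C (str C x) y) (\<lambda>x y. cmp C (str C x) y)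
          (\<lambda>x. cmp C f x) (\<lambda>y. cmp C (str C f) y)"
    proof (intro ballI)
      fix X Y f assume f: "f \<in> Hom C X Y"
      show "adjoint_of (Hom C A X) (Hom C A Y) (\<lambda>x y. cmp C (str C x) y) (\<lambda>x y. cmp C (str C x) y)
          (\<lambda>x. cmp C f x) (\<lambda>y. cmp C (str C f) y)"
        unfolding adjoint_of_def
      proof (intro conjI ballI)
        fix x assume x: "x \<in> Hom C A X"
        show "cmp C f x \<in> Hom C A Y" using P.comp_Hom[OF x f] .
        fix y assume y: "y \<in> Hom C A Y"
        have "cmp C (str C (cmp C (str C f) y)) x = cmp C (cmp C (str C y) f) x"
          using P.st_comp[OF y P.st_Hom[OF f]] P.st_st[OF f] by simp
        also have "\<dots> = cmp C (str C y) (cmp C f x)" using P.assoc[OF x f P.st_Hom[OF y]] by simp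
        finally show "cmp C (str C (cmp C (str C f) y)) x = cmp C (str C y) (cmp C f x)" .
      next
        fix y assume y: "y \<in> Hom C A Y"
        show "cmp C (str C f) y \<in> Hom C A X" using P.comp_Hom[OF y P.st_Hom[OF f]] .
      qed
    qed
    show "\<forall>X\<in>obj C. \<forall>x\<in>Hom C A X. cmp C (idt C X) x = x" using P.idl by blast
    show "\<forall>X\<in>obj C. \<forall>Y\<in>obj C. \<forall>Z\<in>obj C. \<forall>f\<in>Hom C X Y. \<forall>g\<in>Hom C Y Z. \<forall>x\<in>Hom C A X.
        cmp C (cmp C g f) x = cmp C g (cmp C f x)" using P.assoc by metis
  qed
qed

end
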